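(* Let $\alpha=(\alpha_n)_{n\in\mathbb{N}}\in\ell^2$ and let $f_\alpha(z)=\sum_{n\ge0}\alpha_n z^n$. The following statements are equivalent: (i) the Rhaly operator $R_\alpha$, $(R_\alpha f)(k)=\alpha_k\sum_{j=0}^k f(j)$, is compact on $\ell^2$; (ii) $f_\alpha$ belongs to $\lambda^2_{1/2}$; (iii) $\displaystyle\lim_{n\to\infty} 2^n\sum_{j=2^n}^{2^{n+1}-1}|\alpha_j|^2=0$.
   Context: $\mathbb{N}=\{0,1,2,\dots\}$; $\ell^2$ is the Hilbert space of square-summable functions $f:\mathbb{N}\to\mathbb{C}$. For $\alpha\in\ell^2$, $f_\alpha\in H^2$ (Hardy space of the unit disc), identified with its boundary function on $\mathbb{T}$. The small mean Lipschitz space is $\lambda^2_{1/2}=\{f\in L^2(\mathbb{T}): \sup_{t}|t|^{-1/2}\|f_t-f\|_{L^2}<\infty \text{ and } \lim_{t\to0}|t|^{-1/2}\|f_t-f\|_{L^2}=0\}$, where $f_t(e^{i\theta})=f(e^{i(\theta-t)})$. *)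

theory Defs
  imports "HOL-Analysis.Analysis"
begin

definition ell2 :: "(nat \<Rightarrow> complex) set" where
  "ell2 = {f. summable (\<lambda>n. (cmod (f n))\<^sup>2)}"

definition ell2_norm :: "(nat \<Rightarrow> complex) \<Rightarrow> real" where
  "ell2_norm f = sqrt (\<Sum>n. (cmod (f n))\<^sup>2)"

definition rhaly :: "(nat \<Rightarrow> complex) \<Rightarrow> (nat \<Rightarrow> complex) \<Rightarrow> (nat \<Rightarrow> complex)" where
  "rhaly \<alpha> f = (\<lambda>k. \<alpha> k * (\<Sum>j\<le>k. f j))"

text \<open>A (linear) map T is a compact operator on l^2: it maps l^2 into l^2 and maps
  bounded sequences to sequences having an l^2-norm convergent subsequence
  (i.e. images of bounded sets are relatively compact).\<close>
definition compact_op_ell2 :: "((nat \<Rightarrow> complex) \<Rightarrow> (nat \<Rightarrow> complex)) \<Rightarrow> bool" where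
  "compact_op_ell2 T \<longleftrightarrow>
     (\<forall>x\<in>ell2. T x \<in> ell2) \<and>
     (\<forall>X (B::real). (\<forall>m. X m \<in> ell2 \<and> ell2_norm (X m) \<le> B) \<longrightarrow>
        (\<exists>(r::nat\<Rightarrow>nat) y. strict_mono r \<and> y \<in> ell2 \<and>
               (\<lambda>m. ell2_norm (T (X (r m)) - y)) \<longlonglongrightarrow> 0))"

text \<open>Functions on the unit circle are represented as 2pi-periodic functions of the angle.
  L^2(T): measurable periodic functions with square integrable modulus on [0,2pi].\<close>
definition L2T :: "(real \<Rightarrow> complex) set" where
  "L2T = {h. h \<in> borel_measurable lborel \<and> (\<forall>\<theta>. h (\<theta> + 2*pi) = h \<theta>) \<and>
             set_integrable lborel {0..2*pi} (\<lambda>\<theta>. (cmod (h \<theta>))\<^sup>2)}"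

definition L2T_norm :: "(real \<Rightarrow> complex) \<Rightarrow> real" where
  "L2T_norm h = sqrt ((LINT \<theta>:{0..2*pi}|lborel. (cmod (h \<theta>))\<^sup>2) / (2*pi))"

text \<open>g is the boundary function of f_alpha = sum alpha_n z^n: the partial sums
  sum_{n<N} alpha_n e^{i n theta} converge to g in L^2(T).\<close>
definition boundary_fun :: "(nat \<Rightarrow> complex) \<Rightarrow> (real \<Rightarrow> complex) \<Rightarrow> bool" where
  "boundary_fun \<alpha> g \<longleftrightarrow> g \<in> L2T \<and>
     (\<lambda>N. L2T_norm (\<lambda>\<theta>. g \<theta> - (\<Sum>n<N. \<alpha> n * exp (\<i> * of_nat n * of_real \<theta>))))
       \<longlonglongrightarrow> 0"

text \<open>Small mean Lipschitz space lambda^2_{1/2}; the translate f_t is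
  f_t(e^{i theta}) = f(e^{i(theta - t)}).\<close>
definition small_mean_lip :: "(real \<Rightarrow> complex) set" where
  "small_mean_lip = {f. f \<in> L2T \<and>
     (\<exists>C. \<forall>t. t \<noteq> 0 \<longrightarrow> L2T_norm (\<lambda>\<theta>. f (\<theta> - t) - f \<theta>) / sqrt \<bar>t\<bar> \<le> C) \<and>
     ((\<lambda>t. L2T_norm (\<lambda>\<theta>. f (\<theta> - t) - f \<theta>) / sqrt \<bar>t\<bar>) \<longlongrightarrow> 0) (at 0)}"

end

theory Submission
  imports Defs
begin

lemma abel_identity:
  fixes a s \<tau> :: "nat \<Rightarrow> real"
  assumes "\<And>k. a k = \<tau> k - \<tau> (Suc k)" and "j \<le> K"
  shows "(\<Sum>k\<in>{j..<K}. a k * s k) + s K * \<tau> K = s j * \<tau> j + (\<Sum>k\<in>{j..<K}. (s (Suc k) - s k) * \<tau> (Suc k))"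
  using assms(2)
proof (induction K)
  case 0 then show ?case by simp
next
  case (Suc K)
  show ?case
  proof (cases "j = Suc K")
    case True then show ?thesis by simp
  next
    case False
    then have "j \<le> K" using Suc by simp
    have e: "a K * s K = \<tau> K * s K - \<tau> (Suc K) * s K" unfolding assms(1) by (simp add: algebra_simps)
    show ?thesis using Suc.IH[OF \<open>j \<le> K\<close>] \<open>j \<le> K\<close> e by (simp add: algebra_simps)
  qed
qed

definition tl2 :: "(nat \<Rightarrow> real) \<Rightarrow> nat \<Rightarrow> real" where
  "tl2 a k = (\<Sum>i. a (i + k))"

lemma tl2_step:
  assumes "summable a"
  shows "tl2 a k = a k + tl2 a (Suc k)"
proof -
  have s: "summable (\<lambda>i. a (i + k))" using summable_ignore_initial_segment[OF assms] by simp
  have "(\<Sum>i. a (Suc i + k)) = (\<Sum>i. a (i + k)) - a (0 + k)"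
    using suminf_split_head[OF s] by simp
  then show ?thesis unfolding tl2_def by simp
qed

lemma tl2_nonneg:
  assumes "summable a" "\<And>k. a k \<ge> 0"
  shows "tl2 a k \<ge> 0"
  unfolding tl2_def
  by (rule suminf_nonneg) (use summable_ignore_initial_segment[OF assms(1), of k] assms(2) in auto)

lemma sum_swap_tri:
  fixes g :: "nat \<Rightarrow> nat \<Rightarrow> real"
  shows "(\<Sum>k<K. \<Sum>j\<le>k. g k j) = (\<Sum>j<K. \<Sum>k\<in>{j..<K}. g k j)"
proof (induction K)
  case 0 then show ?case by simp
next
  case (Suc K)
  have "(\<Sum>j<Suc K. \<Sum>k\<in>{j..<Suc K}. g k j) = (\<Sum>j<K. \<Sum>k\<in>{j..<Suc K}. g k j) + g K K"
    by simp
  also have "(\<Sum>j<K. \<Sum>k\<in>{j..<Suc K}. g k j) = (\<Sum>j<K. (\<Sum>k\<in>{j..<K}. g k j) + g K j)"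
    by (rule sum.cong) auto
  also have "\<dots> = (\<Sum>j<K. \<Sum>k\<in>{j..<K}. g k j) + (\<Sum>j<K. g K j)"
    by (simp add: sum.distrib)
  finally show ?case using Suc.IH by (simp add: lessThan_Suc_atMost[symmetric])
qed

lemma sum_inv_sqrt:
  "(\<Sum>j\<le>k. 1 / sqrt (real j + 1)) \<le> 2 * sqrt (real k + 1)"
proof (induction k)
  case 0 then show ?case by simp
next
  case (Suc k)
  define u where "u = sqrt (real k + 1)"
  define v where "v = sqrt (real k + 2)"
  have u0: "u > 0" and v0: "v > 0" unfolding u_def v_def by auto
  have uu: "u * u = real k + 1" unfolding u_def by (simp add: real_sqrt_mult_self)
  have vv: "v * v = real k + 2" unfolding v_def by (simp add: real_sqrt_mult_self)
  have "2 * u * v \<le> u * u + v * v" using sum_squares_bound[of u v] by (simp add: power2_eq_square)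
  then have "1 \<le> 2 * v * (v - u)" using uu vv by (simp add: algebra_simps)
  then have "1 \<le> 2 * (v - u) * v" by (simp add: algebra_simps)
  then have "1 / v \<le> 2 * (v - u)" by (subst pos_divide_le_eq[OF v0])
  then have "2 * u + 1 / v \<le> 2 * v" by simp
  moreover have "sqrt (real (Suc k) + 1) = v" unfolding v_def by (simp add: add.commute)
  ultimately show ?case using Suc.IH unfolding u_def by simp
qed

lemma abel_bound_sqrt:
  fixes a :: "nat \<Rightarrow> real"
  assumes sa: "summable a" and a0: "\<And>k. a k \<ge> 0"
    and eps: "\<And>k. (real k + 1) * tl2 a k \<le> \<epsilon>"
  shows "(\<Sum>k\<in>{j..<K}. a k * sqrt (real k + 1)) \<le> 2 * \<epsilon> / sqrt (real j + 1)"
proof -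
  define s where "s k = sqrt (real k + 1)" for k
  define \<tau> where "\<tau> = tl2 a"
  have s0: "s k > 0" for k unfolding s_def by auto
  have smono: "s k \<le> s (Suc k)" for k unfolding s_def by auto
  have t0: "\<tau> k \<ge> 0" for k unfolding \<tau>_def using tl2_nonneg[OF sa a0] .
  have e0: "\<epsilon> \<ge> 0" using eps[of 0] t0[of 0] unfolding \<tau>_def by simp
  have tb: "\<tau> k \<le> \<epsilon> / (s k)^2" for k
  proof -
    have "(s k)^2 = real k + 1" unfolding s_def by simp
    then show ?thesis using eps[of k] unfolding \<tau>_def by (simp add: field_simps)
  qed
  show ?thesis
  proof (cases "j \<le> K")
    case False
    then show ?thesis using e0 by simp
  next
    case True
    have ai: "a k = \<tau> k - \<tau> (Suc k)" for k unfolding \<tau>_def using tl2_step[OF sa, of k] by simp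
    have id: "(\<Sum>k\<in>{j..<K}. a k * s k) + s K * \<tau> K = s j * \<tau> j + (\<Sum>k\<in>{j..<K}. (s (Suc k) - s k) * \<tau> (Suc k))"
      by (rule abel_identity[where a=a and \<tau>=\<tau> and s=s, OF ai True])
    have "s K * \<tau> K \<ge> 0" using s0 t0 by (simp add: less_imp_le)
    have h1: "s j * \<tau> j \<le> \<epsilon> / s j"
    proof -
      have "s j * \<tau> j \<le> s j * (\<epsilon> / (s j)^2)" using tb[of j] s0[of j] by (intro mult_left_mono) auto
      also have "\<dots> = \<epsilon> / s j" using s0[of j] by (simp add: power2_eq_square field_simps)
      finally show ?thesis .
    qed
    have h2: "(s (Suc k) - s k) * \<tau> (Suc k) \<le> \<epsilon> * ((1 / s k) - (1 / s (Suc k)))" for k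
    proof -
      have "(s (Suc k) - s k) * \<tau> (Suc k) \<le> (s (Suc k) - s k) * (\<epsilon> / (s (Suc k))^2)"
        using tb[of "Suc k"] smono[of k] by (intro mult_left_mono) auto
      also have "\<dots> = \<epsilon> * ((s (Suc k) - s k) / (s (Suc k) * s (Suc k)))" by (simp add: power2_eq_square)
      also have "\<dots> \<le> \<epsilon> * ((s (Suc k) - s k) / (s k * s (Suc k)))"
        apply (rule mult_left_mono[OF _ e0])
        apply (rule divide_left_mono)
        using smono[of k] s0[of k] s0[of "Suc k"] by (auto intro!: mult_right_mono mult_pos_pos)
      also have "\<dots> = \<epsilon> * ((1 / s k) - (1 / s (Suc k)))"
        using s0[of k] s0[of "Suc k"] by (simp add: field_simps)
      finally show ?thesis .
    qed
    have "(\<Sum>k\<in>{j..<K}. (s (Suc k) - s k) * \<tau> (Suc k)) \<le> (\<Sum>k\<in>{j..<K}. \<epsilon> * ((1 / s k) - (1 / s (Suc k))))"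
      by (rule sum_mono) (rule h2)
    also have "\<dots> = \<epsilon> * (\<Sum>k\<in>{j..<K}. (1 / s k) - (1 / s (Suc k)))" by (simp add: sum_distrib_left)
    also have "(\<Sum>k\<in>{j..<K}. (1 / s k) - (1 / s (Suc k))) = 1 / s j - 1 / s K"
      using sum_Suc_diff'[OF True, of "\<lambda>k. - (1 / s k)"] by simp
    also have "\<epsilon> * (1 / s j - 1 / s K) \<le> \<epsilon> / s j" using e0 s0[of K] by (simp add: right_diff_distrib)
    finally have "(\<Sum>k\<in>{j..<K}. (s (Suc k) - s k) * \<tau> (Suc k)) \<le> \<epsilon> / s j" .
    then have "(\<Sum>k\<in>{j..<K}. a k * s k) \<le> 2 * \<epsilon> / s j"
      using id h1 \<open>s K * \<tau> K \<ge> 0\<close> by simp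
    then show ?thesis unfolding s_def .
  qed
qed

lemma hardy_partial:
  fixes a :: "nat \<Rightarrow> real" and f :: "nat \<Rightarrow> complex"
  assumes sa: "summable a" and a0: "\<And>k. a k \<ge> 0"
    and eps: "\<And>k. (real k + 1) * tl2 a k \<le> \<epsilon>"
    and sf: "summable (\<lambda>j. (cmod (f j))\<^sup>2)"
  shows "(\<Sum>k<K. a k * (cmod (\<Sum>j\<le>k. f j))\<^sup>2) \<le> 4 * \<epsilon> * (\<Sum>j. (cmod (f j))\<^sup>2)"
proof -
  define s where "s k = sqrt (real k + 1)" for k
  define c where "c j = (cmod (f j))\<^sup>2" for j
  have s0: "s k > 0" for k unfolding s_def by auto
  have c0: "c j \<ge> 0" for j unfolding c_def by simp
  have t0: "tl2 a 0 \<ge> 0" using tl2_nonneg[OF sa a0] .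
  have e0: "\<epsilon> \<ge> 0" using eps[of 0] t0 by simp
  have pt: "(cmod (\<Sum>j\<le>k. f j))\<^sup>2 \<le> 2 * s k * (\<Sum>j\<le>k. c j * s j)" for k
  proof -
    define r where "r j = sqrt (s j)" for j
    have r0: "r j > 0" for j unfolding r_def using s0 by simp
    have rr: "(r j)^2 = s j" for j unfolding r_def using s0[of j] by simp
    have rc: "(1 / r j) * (cmod (f j) * r j) = cmod (f j)" for j using r0[of j] by simp
    have "cmod (\<Sum>j\<le>k. f j) \<le> (\<Sum>j\<le>k. cmod (f j))" by (rule norm_sum)
    then have "(cmod (\<Sum>j\<le>k. f j))\<^sup>2 \<le> (\<Sum>j\<le>k. cmod (f j))\<^sup>2" by (simp add: power_mono)
    also have "(\<Sum>j\<le>k. cmod (f j)) = (\<Sum>j\<le>k. (1 / r j) * (cmod (f j) * r j))"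
      by (simp only: rc)
    also have "(\<Sum>j\<le>k. (1 / r j) * (cmod (f j) * r j))\<^sup>2 \<le> (\<Sum>j\<le>k. (1 / r j)\<^sup>2) * (\<Sum>j\<le>k. (cmod (f j) * r j)\<^sup>2)"
      by (rule Cauchy_Schwarz_ineq_sum)
    also have "(\<Sum>j\<le>k. (1 / r j)\<^sup>2) = (\<Sum>j\<le>k. 1 / s j)"
      by (rule sum.cong) (auto simp: power_divide rr)
    also have "(\<Sum>j\<le>k. (cmod (f j) * r j)\<^sup>2) = (\<Sum>j\<le>k. c j * s j)"
      by (rule sum.cong) (auto simp: power_mult_distrib rr c_def)
    also have "(\<Sum>j\<le>k. 1 / s j) \<le> 2 * s k" unfolding s_def by (rule sum_inv_sqrt)
    then have "(\<Sum>j\<le>k. 1 / s j) * (\<Sum>j\<le>k. c j * s j) \<le> 2 * s k * (\<Sum>j\<le>k. c j * s j)"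
      by (rule mult_right_mono) (use c0 s0 in \<open>auto intro!: sum_nonneg mult_nonneg_nonneg simp: less_imp_le\<close>)
    finally show ?thesis .
  qed
  have "(\<Sum>k<K. a k * (cmod (\<Sum>j\<le>k. f j))\<^sup>2) \<le> (\<Sum>k<K. a k * (2 * s k * (\<Sum>j\<le>k. c j * s j)))"
    by (rule sum_mono) (use pt a0 in \<open>auto intro!: mult_left_mono\<close>)
  also have "\<dots> = 2 * (\<Sum>k<K. \<Sum>j\<le>k. c j * s j * (a k * s k))"
    by (simp add: sum_distrib_left sum_distrib_right algebra_simps)
  also have "(\<Sum>k<K. \<Sum>j\<le>k. c j * s j * (a k * s k)) = (\<Sum>j<K. \<Sum>k\<in>{j..<K}. c j * s j * (a k * s k))"
    by (rule sum_swap_tri)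
  also have "\<dots> = (\<Sum>j<K. c j * s j * (\<Sum>k\<in>{j..<K}. a k * s k))"
    by (simp add: sum_distrib_left)
  also have "\<dots> \<le> (\<Sum>j<K. c j * s j * (2 * \<epsilon> / s j))"
    apply (rule sum_mono)
    apply (rule mult_left_mono)
    unfolding s_def using abel_bound_sqrt[OF sa a0 eps] c0 apply simp
    using c0 s0 unfolding s_def by simp
  also have "\<dots> = (\<Sum>j<K. 2 * \<epsilon> * c j)"
  proof (rule sum.cong)
    fix j show "c j * s j * (2 * \<epsilon> / s j) = 2 * \<epsilon> * c j" using s0[of j] by simp
  qed simp
  also have "\<dots> = 2 * \<epsilon> * (\<Sum>j<K. c j)" by (simp add: sum_distrib_left)
  also have "2 * \<epsilon> * (\<Sum>j<K. c j) \<le> 2 * \<epsilon> * (\<Sum>j. c j)"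
    using sf e0 unfolding c_def by (intro mult_left_mono sum_le_suminf) auto
  finally show ?thesis unfolding c_def by simp
qed

lemma bounded_subseq_pointwise:
  fixes X :: "nat \<Rightarrow> nat \<Rightarrow> complex"
  assumes "\<And>m j. cmod (X m j) \<le> B"
  shows "\<exists>r l. strict_mono r \<and> (\<forall>j. (\<lambda>m. X (r m) j) \<longlonglongrightarrow> l j)"
proof -
  define S where "S = Pi\<^sub>E (UNIV::nat set) (\<lambda>_. cball (0::complex) B)"
  have "compactin (product_topology (\<lambda>_. euclidean) UNIV) S"
    unfolding S_def by (simp add: compactin_PiE)
  then have "compact S" by (simp add: euclidean_product_topology)
  then have sc: "seq_compact S" by (rule compact_imp_seq_compact)
  have "X m \<in> S" for m unfolding S_def using assms by (auto simp: PiE_iff)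
  then obtain l r where "l \<in> S" "strict_mono r" "(X \<circ> r) \<longlonglongrightarrow> l"
    using sc unfolding seq_compact_def by meson
  moreover have "(\<lambda>m. X (r m) j) \<longlonglongrightarrow> l j" for j
  proof -
    have "continuous_on UNIV (\<lambda>x::nat\<Rightarrow>complex. x j)" by simp
    then have "isCont (\<lambda>x::nat\<Rightarrow>complex. x j) l"
      using continuous_on_eq_continuous_at[OF open_UNIV] by blast
    from isCont_tendsto_compose[OF this \<open>(X \<circ> r) \<longlonglongrightarrow> l\<close>] show ?thesis by (simp add: o_def)
  qed
  ultimately show ?thesis by blast
qed

lemma ell2_coord_le:
  assumes "f \<in> ell2"
  shows "cmod (f j) \<le> ell2_norm f"
proof -
  have "(cmod (f j))\<^sup>2 \<le> (\<Sum>n. (cmod (f n))\<^sup>2)"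
    using assms unfolding ell2_def
    using sum_le_suminf[of "\<lambda>n. (cmod (f n))\<^sup>2" "{j}"] by auto
  then have "sqrt ((cmod (f j))\<^sup>2) \<le> sqrt (\<Sum>n. (cmod (f n))\<^sup>2)" by (rule real_sqrt_le_mono)
  then show ?thesis unfolding ell2_norm_def by simp
qed

lemma cmod_diff_sq_le: "(cmod (x - y))\<^sup>2 \<le> 2 * (cmod x)\<^sup>2 + 2 * (cmod y)\<^sup>2"
proof -
  have "cmod (x - y) \<le> cmod x + cmod y" by (rule norm_triangle_ineq4)
  then have "(cmod (x - y))\<^sup>2 \<le> (cmod x + cmod y)\<^sup>2" by (simp add: power_mono)
  also have "\<dots> \<le> 2 * (cmod x)\<^sup>2 + 2 * (cmod y)\<^sup>2"
    using sum_squares_bound[of "cmod x" "cmod y"] by (simp add: power2_eq_square algebra_simps)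
  finally show ?thesis .
qed

lemma ell2_diff:
  assumes "f \<in> ell2" "g \<in> ell2"
  shows "f - g \<in> ell2"
    "(\<Sum>n. (cmod ((f - g) n))\<^sup>2) \<le> 2 * (\<Sum>n. (cmod (f n))\<^sup>2) + 2 * (\<Sum>n. (cmod (g n))\<^sup>2)"
proof -
  have s: "summable (\<lambda>n. 2 * (cmod (f n))\<^sup>2 + 2 * (cmod (g n))\<^sup>2)"
    using assms unfolding ell2_def by (intro summable_add summable_mult) auto
  have le: "(cmod ((f - g) n))\<^sup>2 \<le> 2 * (cmod (f n))\<^sup>2 + 2 * (cmod (g n))\<^sup>2" for n
    using cmod_diff_sq_le by simp
  have s2: "summable (\<lambda>n. (cmod ((f - g) n))\<^sup>2)"
    by (rule summable_comparison_test'[OF s]) (use le in auto)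
  then show "f - g \<in> ell2" unfolding ell2_def by simp
  have "(\<Sum>n. (cmod ((f - g) n))\<^sup>2) \<le> (\<Sum>n. 2 * (cmod (f n))\<^sup>2 + 2 * (cmod (g n))\<^sup>2)"
    by (rule suminf_le[OF le s2 s])
  also have "\<dots> = 2 * (\<Sum>n. (cmod (f n))\<^sup>2) + 2 * (\<Sum>n. (cmod (g n))\<^sup>2)"
    using assms unfolding ell2_def by (subst suminf_add[symmetric]) (auto intro!: summable_mult simp: suminf_mult)
  finally show "(\<Sum>n. (cmod ((f - g) n))\<^sup>2) \<le> 2 * (\<Sum>n. (cmod (f n))\<^sup>2) + 2 * (\<Sum>n. (cmod (g n))\<^sup>2)" .
qed

lemma rhaly_bound:
  assumes "\<alpha> \<in> ell2" and eps: "\<And>k. (real k + 1) * tl2 (\<lambda>n. (cmod (\<alpha> n))\<^sup>2) k \<le> \<epsilon>"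
    and "f \<in> ell2"
  shows "rhaly \<alpha> f \<in> ell2" "(\<Sum>k. (cmod (rhaly \<alpha> f k))\<^sup>2) \<le> 4 * \<epsilon> * (\<Sum>j. (cmod (f j))\<^sup>2)"
proof -
  have sa: "summable (\<lambda>n. (cmod (\<alpha> n))\<^sup>2)" using assms(1) unfolding ell2_def by simp
  have sf: "summable (\<lambda>n. (cmod (f n))\<^sup>2)" using assms(3) unfolding ell2_def by simp
  have eq: "(cmod (rhaly \<alpha> f k))\<^sup>2 = (cmod (\<alpha> k))\<^sup>2 * (cmod (\<Sum>j\<le>k. f j))\<^sup>2" for k
    unfolding rhaly_def by (simp add: norm_mult power_mult_distrib)
  have b: "(\<Sum>k<K. (cmod (rhaly \<alpha> f k))\<^sup>2) \<le> 4 * \<epsilon> * (\<Sum>j. (cmod (f j))\<^sup>2)" for K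
    unfolding eq by (rule hardy_partial[OF sa _ eps sf]) simp
  have sR: "summable (\<lambda>k. (cmod (rhaly \<alpha> f k))\<^sup>2)"
    by (rule summableI_nonneg_bounded[OF _ b]) simp
  then show "rhaly \<alpha> f \<in> ell2" unfolding ell2_def by simp
  show "(\<Sum>k. (cmod (rhaly \<alpha> f k))\<^sup>2) \<le> 4 * \<epsilon> * (\<Sum>j. (cmod (f j))\<^sup>2)"
    by (rule suminf_le_const[OF sR b])
qed

lemma tl2_trunc:
  fixes a :: "nat \<Rightarrow> real"
  assumes "summable a" "\<And>k. a k \<ge> 0"
  shows "tl2 (\<lambda>k. if N \<le> k then a k else 0) k = tl2 a (max k N)"
proof (cases "N \<le> k")
  case True
  then show ?thesis unfolding tl2_def by (simp add: max_def)
next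
  case False
  define b where "b = (\<lambda>k. if N \<le> k then a k else 0)"
  have sb: "summable b"
    unfolding b_def by (rule summable_comparison_test'[OF assms(1)]) (use assms(2) in auto)
  have sbk: "summable (\<lambda>i. b (i + k))" using summable_ignore_initial_segment[OF sb, of k] by simp
  have "(\<Sum>i. b (i + k)) = (\<Sum>i. b (i + (N - k) + k)) + (\<Sum>i<N - k. b (i + k))"
    by (rule suminf_split_initial_segment[OF sbk])
  also have "(\<Sum>i<N - k. b (i + k)) = 0" unfolding b_def by (intro sum.neutral) auto
  also have "(\<lambda>i. b (i + (N - k) + k)) = (\<lambda>i. a (i + N))" using False unfolding b_def by auto
  finally show ?thesis using False unfolding tl2_def b_def by (simp add: max_def)
qed

lemma compact_from_tail:
  assumes aE: "\<alpha> \<in> ell2"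
    and TC: "(\<lambda>k. (real k + 1) * tl2 (\<lambda>n. (cmod (\<alpha> n))\<^sup>2) k) \<longlonglongrightarrow> 0"
  shows "compact_op_ell2 (rhaly \<alpha>)"
proof -
  define a where "a = (\<lambda>n. (cmod (\<alpha> n))\<^sup>2)"
  have sa: "summable a" using aE unfolding ell2_def a_def by simp
  have a0: "\<And>k. a k \<ge> 0" unfolding a_def by simp
  have t0: "\<And>k. tl2 a k \<ge> 0" using tl2_nonneg[OF sa a0] .
  have "Bseq (\<lambda>k. (real k + 1) * tl2 a k)" using convergent_imp_Bseq convergentI TC unfolding a_def by blast
  then obtain E where E0: "\<And>k. norm ((real k + 1) * tl2 a k) \<le> E" unfolding Bseq_def by blast
  have E: "\<And>k. (real k + 1) * tl2 (\<lambda>n. (cmod (\<alpha> n))\<^sup>2) k \<le> E"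
    using abs_le_D1[OF E0[unfolded real_norm_def]] unfolding a_def by blast
  have part1: "\<forall>x\<in>ell2. rhaly \<alpha> x \<in> ell2" using rhaly_bound(1)[OF aE E] by blast
  have part2: "\<exists>(r::nat\<Rightarrow>nat) y. strict_mono r \<and> y \<in> ell2 \<and>
               (\<lambda>m. ell2_norm (rhaly \<alpha> (X (r m)) - y)) \<longlonglongrightarrow> 0"
    if H: "\<forall>m. X m \<in> ell2 \<and> ell2_norm (X m) \<le> B" for X B
  proof -
    have XB: "cmod (X m j) \<le> B" for m j
    proof -
      have "X m \<in> ell2" "ell2_norm (X m) \<le> B" using H by auto
      then show ?thesis using ell2_coord_le[of "X m" j] by linarith
    qed
    have B0: "B \<ge> 0" using XB[of 0 0] norm_ge_zero[of "X 0 0"] by linarith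
    obtain r l where r: "strict_mono r" and lim: "\<And>j. (\<lambda>m. X (r m) j) \<longlonglongrightarrow> l j"
      using bounded_subseq_pointwise[of X B, OF XB] by blast
    have sumX: "(\<Sum>n. (cmod (X m n))\<^sup>2) \<le> B\<^sup>2" for m
    proof -
      have S0: "(\<Sum>n. (cmod (X m n))\<^sup>2) \<ge> 0"
        using H unfolding ell2_def by (intro suminf_nonneg) auto
      have "sqrt (\<Sum>n. (cmod (X m n))\<^sup>2) \<le> B" using H unfolding ell2_norm_def by blast
      then have "(sqrt (\<Sum>n. (cmod (X m n))\<^sup>2))\<^sup>2 \<le> B\<^sup>2" by (rule power_mono) (use S0 in simp)
      then show ?thesis using S0 by simp
    qed
    have partX: "(\<Sum>j<J. (cmod (X m j))\<^sup>2) \<le> B\<^sup>2" for m J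
    proof -
      have "(\<Sum>j<J. (cmod (X m j))\<^sup>2) \<le> (\<Sum>j. (cmod (X m j))\<^sup>2)"
        by (rule sum_le_suminf) (use H in \<open>auto simp: ell2_def\<close>)
      then show ?thesis using sumX[of m] by linarith
    qed
    have partl: "(\<Sum>j<J. (cmod (l j))\<^sup>2) \<le> B\<^sup>2" for J
    proof (rule LIMSEQ_le_const2)
      show "(\<lambda>m. \<Sum>j<J. (cmod (X (r m) j))\<^sup>2) \<longlonglongrightarrow> (\<Sum>j<J. (cmod (l j))\<^sup>2)"
        by (intro tendsto_intros lim)
      show "\<exists>N. \<forall>n\<ge>N. (\<Sum>j<J. (cmod (X (r n) j))\<^sup>2) \<le> B\<^sup>2" using partX by blast
    qed
    have sl: "summable (\<lambda>j. (cmod (l j))\<^sup>2)"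
      by (rule summableI_nonneg_bounded[OF _ partl]) simp
    then have lE: "l \<in> ell2" unfolding ell2_def by simp
    have suml: "(\<Sum>j. (cmod (l j))\<^sup>2) \<le> B\<^sup>2" by (rule suminf_le_const[OF sl partl])
    define y where "y = rhaly \<alpha> l"
    have yE: "y \<in> ell2" unfolding y_def using part1 lE by blast
    define z where "z m = X (r m) - l" for m
    have zE: "z m \<in> ell2" for m unfolding z_def using ell2_diff(1)[of "X (r m)" l] H lE by blast
    have sumz: "(\<Sum>n. (cmod (z m n))\<^sup>2) \<le> 4 * B\<^sup>2" for m
      using ell2_diff(2)[of "X (r m)" l] H lE sumX[of "r m"] suml unfolding z_def by simp
    have zlim: "(\<lambda>m. z m j) \<longlonglongrightarrow> 0" for j
    proof -
      have "(\<lambda>m. X (r m) j - l j) \<longlonglongrightarrow> l j - l j" by (intro tendsto_intros lim)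
      then show ?thesis unfolding z_def by simp
    qed
    have Req: "rhaly \<alpha> (X (r m)) - y = rhaly \<alpha> (z m)" for m
      unfolding rhaly_def y_def z_def by (auto simp: fun_eq_iff sum_subtractf right_diff_distrib)
    have main: "(\<lambda>m. \<Sum>k. (cmod (rhaly \<alpha> (z m) k))\<^sup>2) \<longlonglongrightarrow> 0"
    proof (rule LIMSEQ_I)
      fix e :: real assume e0: "e > 0"
      define \<delta> where "\<delta> = e / (32 * B\<^sup>2 + 1)"
      have p: "32 * B\<^sup>2 + 1 > 0" using zero_le_power2[of B] by linarith
      have d0: "\<delta> > 0" unfolding \<delta>_def using e0 p by (intro divide_pos_pos)
      have dB: "4 * \<delta> * (4 * B\<^sup>2) \<le> e / 2"
      proof -
        have "16 * B\<^sup>2 * e \<le> e / 2 * (32 * B\<^sup>2 + 1)" using e0 by (simp add: algebra_simps)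
        then have "16 * B\<^sup>2 * e / (32 * B\<^sup>2 + 1) \<le> e / 2"
          by (subst pos_divide_le_eq[OF p])
        then show ?thesis unfolding \<delta>_def by (simp add: algebra_simps)
      qed
      obtain N where N: "\<And>k. k \<ge> N \<Longrightarrow> norm ((real k + 1) * tl2 a k - 0) < \<delta>"
        using LIMSEQ_D[OF TC[folded a_def] d0] by blast
      define aN where "aN = (\<lambda>k. if N \<le> k then a k else 0)"
      have saN: "summable aN" unfolding aN_def by (rule summable_comparison_test'[OF sa]) (use a0 in auto)
      have aN0: "\<And>k. aN k \<ge> 0" unfolding aN_def using a0 by simp
      have epsN: "(real k + 1) * tl2 aN k \<le> \<delta>" for k
      proof (cases "N \<le> k")
        case True
        then have "tl2 aN k = tl2 a k" unfolding aN_def using tl2_trunc[OF sa a0] by (simp add: max_def)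
        then show ?thesis using N[OF True] t0[of k] by simp
      next
        case False
        then have "tl2 aN k = tl2 a N" unfolding aN_def using tl2_trunc[OF sa a0] by (simp add: max_def)
        moreover have "(real k + 1) * tl2 a N \<le> (real N + 1) * tl2 a N"
          using False t0[of N] by (intro mult_right_mono) auto
        moreover have "(real N + 1) * tl2 a N < \<delta>" using N[of N] t0[of N] by simp
        ultimately show ?thesis by simp
      qed
      define c where "c m k = (cmod (rhaly \<alpha> (z m) k))\<^sup>2" for m k
      have c0: "c m k \<ge> 0" for m k unfolding c_def by simp
      have fin: "(\<lambda>m. \<Sum>k<N. c m k) \<longlonglongrightarrow> 0"
      proof -
        have "(\<lambda>m. \<Sum>k<N. (cmod (\<alpha> k * (\<Sum>j\<le>k. z m j)))\<^sup>2) \<longlonglongrightarrow> (\<Sum>k<N. (cmod (\<alpha> k * (\<Sum>j\<le>k. (0::complex))))\<^sup>2)"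
          by (intro tendsto_intros zlim)
        then show ?thesis unfolding c_def rhaly_def by simp
      qed
      obtain M where M: "\<And>m. m \<ge> M \<Longrightarrow> norm ((\<Sum>k<N. c m k) - 0) < e / 2"
        using LIMSEQ_D[OF fin, of "e/2"] e0 by auto
      show "\<exists>M. \<forall>m\<ge>M. norm ((\<Sum>k. (cmod (rhaly \<alpha> (z m) k))\<^sup>2) - 0) < e"
      proof (intro exI allI impI)
        fix m assume "m \<ge> M"
        have ceq: "c m k = (if k < N then c m k else 0) + aN k * (cmod (\<Sum>j\<le>k. z m j))\<^sup>2" for k
          unfolding c_def aN_def a_def rhaly_def by (simp add: norm_mult power_mult_distrib)
        have pb: "(\<Sum>k<K. c m k) \<le> (\<Sum>k<N. c m k) + 4 * \<delta> * (4 * B\<^sup>2)" for K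
        proof -
          have "(\<Sum>k<K. c m k) = (\<Sum>k<K. (if k < N then c m k else 0)) + (\<Sum>k<K. aN k * (cmod (\<Sum>j\<le>k. z m j))\<^sup>2)"
            by (subst ceq) (simp add: sum.distrib)
          also have "(\<Sum>k<K. (if k < N then c m k else 0)) = (\<Sum>k\<in>{..<K} \<inter> {k. k < N}. c m k)"
            by (simp add: sum.inter_restrict)
          also have "\<dots> \<le> (\<Sum>k<N. c m k)"
            by (rule sum_mono2) (auto simp: c0)
          also have "(\<Sum>k<K. aN k * (cmod (\<Sum>j\<le>k. z m j))\<^sup>2) \<le> 4 * \<delta> * (\<Sum>j. (cmod (z m j))\<^sup>2)"
            by (rule hardy_partial[OF saN aN0 epsN]) (use zE[of m] in \<open>simp add: ell2_def\<close>)
          also have "\<dots> \<le> 4 * \<delta> * (4 * B\<^sup>2)"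
            using sumz[of m] d0 by (intro mult_left_mono) auto
          finally show ?thesis by simp
        qed
        have sc: "summable (\<lambda>k. c m k)"
          using part1 zE[of m] unfolding c_def ell2_def by blast
        have "(\<Sum>k. c m k) \<le> (\<Sum>k<N. c m k) + 4 * \<delta> * (4 * B\<^sup>2)"
          by (rule suminf_le_const[OF sc pb])
        moreover have "(\<Sum>k<N. c m k) < e / 2" using M[OF \<open>m \<ge> M\<close>] by simp
        moreover have "(\<Sum>k. c m k) \<ge> 0" using sc c0 by (intro suminf_nonneg) auto
        ultimately show "norm ((\<Sum>k. (cmod (rhaly \<alpha> (z m) k))\<^sup>2) - 0) < e"
          using dB unfolding c_def by simp
      qed
    qed
    have "(\<lambda>m. sqrt (\<Sum>k. (cmod (rhaly \<alpha> (z m) k))\<^sup>2)) \<longlonglongrightarrow> sqrt 0"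
      by (intro tendsto_intros main)
    then have "(\<lambda>m. ell2_norm (rhaly \<alpha> (X (r m)) - y)) \<longlonglongrightarrow> 0"
      unfolding Req ell2_norm_def by simp
    then show ?thesis using r yE by blast
  qed
  show ?thesis unfolding compact_op_ell2_def using part1 part2 by blast
qed

definition blk :: "(nat \<Rightarrow> complex) \<Rightarrow> nat \<Rightarrow> real" where
  "blk \<alpha> n = (\<Sum>j\<in>{2^n..<2^(n+1)}. (cmod (\<alpha> j))\<^sup>2)"

lemma tl2_mono:
  fixes a :: "nat \<Rightarrow> real"
  assumes sa: "summable a" and a0: "\<And>k. a k \<ge> 0" and "i \<le> j"
  shows "tl2 a j \<le> tl2 a i"
proof -
  have s: "summable (\<lambda>d. a (d + i))" using summable_ignore_initial_segment[OF sa, of i] by simp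
  have "(\<Sum>d. a (d + i)) = (\<Sum>d. a (d + (j - i) + i)) + (\<Sum>d<j - i. a (d + i))"
    by (rule suminf_split_initial_segment[OF s])
  moreover have "(\<lambda>d. a (d + (j - i) + i)) = (\<lambda>d. a (d + j))" using assms(3) by auto
  moreover have "(\<Sum>d<j - i. a (d + i)) \<ge> 0" using a0 by (simp add: sum_nonneg)
  ultimately show ?thesis unfolding tl2_def by simp
qed

lemma blk_le_tl2:
  assumes "\<alpha> \<in> ell2"
  shows "blk \<alpha> n \<le> tl2 (\<lambda>n. (cmod (\<alpha> n))\<^sup>2) (2^n)"
proof -
  have sa: "summable (\<lambda>n. (cmod (\<alpha> n))\<^sup>2)" using assms unfolding ell2_def by simp
  have eq: "{2^n..<2^(n+1)} = {0 + 2^n..<2^n + (2::nat)^n}" by (simp add: mult_2)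
  have "blk \<alpha> n = (\<Sum>i\<in>{0..<2^n}. (cmod (\<alpha> (i + 2^n)))\<^sup>2)"
    unfolding blk_def eq by (rule sum.shift_bounds_nat_ivl)
  also have "\<dots> \<le> tl2 (\<lambda>n. (cmod (\<alpha> n))\<^sup>2) (2^n)"
    unfolding tl2_def
    by (rule sum_le_suminf) (use summable_ignore_initial_segment[OF sa] in auto)
  finally show ?thesis .
qed

lemma TC_imp_D:
  assumes "\<alpha> \<in> ell2"
    and TC: "(\<lambda>k. (real k + 1) * tl2 (\<lambda>n. (cmod (\<alpha> n))\<^sup>2) k) \<longlonglongrightarrow> 0"
  shows "(\<lambda>n. 2 ^ n * blk \<alpha> n) \<longlonglongrightarrow> (0::real)"
proof -
  define a where "a = (\<lambda>n. (cmod (\<alpha> n))\<^sup>2)"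
  have sm: "strict_mono (\<lambda>n::nat. (2::nat)^n)" unfolding strict_mono_def by (simp add: power_strict_increasing)
  have "((\<lambda>k. (real k + 1) * tl2 a k) \<circ> (\<lambda>n. 2^n)) \<longlonglongrightarrow> 0"
    using LIMSEQ_subseq_LIMSEQ[OF TC sm] unfolding a_def .
  then have l1: "(\<lambda>n. (real (2^n) + 1) * tl2 a (2^n)) \<longlonglongrightarrow> 0" by (simp add: o_def)
  have e1: "\<forall>\<^sub>F n in sequentially. 0 \<le> 2 ^ n * blk \<alpha> n" unfolding blk_def
    by (intro always_eventually allI mult_nonneg_nonneg sum_nonneg) auto
  have "2 ^ n * blk \<alpha> n \<le> (real (2^n) + 1) * tl2 a (2^n)" for n
  proof -
    have t0: "tl2 a (2^n) \<ge> 0" using tl2_nonneg[of a] assms(1) unfolding a_def ell2_def by simp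
    have "2 ^ n * blk \<alpha> n \<le> 2 ^ n * tl2 a (2^n)" using blk_le_tl2[OF assms(1)] unfolding a_def by simp
    also have "\<dots> \<le> (real (2^n) + 1) * tl2 a (2^n)" using t0 by (simp add: mult_right_mono)
    finally show ?thesis .
  qed
  then have e2: "\<forall>\<^sub>F n in sequentially. 2 ^ n * blk \<alpha> n \<le> (real (2^n) + 1) * tl2 a (2^n)" by simp
  show ?thesis by (rule tendsto_sandwich[OF e1 e2 _ l1]) simp
qed

lemma blocks_sum:
  fixes a :: "nat \<Rightarrow> real"
  assumes "m \<le> M"
  shows "(\<Sum>j\<in>{2^m..<2^M}. a j) = (\<Sum>n\<in>{m..<M}. \<Sum>j\<in>{2^n..<2^(Suc n)}. a j)"
  using assms
proof (induction M)
  case 0 then show ?case by simp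
next
  case (Suc M)
  show ?case
  proof (cases "m = Suc M")
    case True then show ?thesis by simp
  next
    case False
    then have mM: "m \<le> M" using Suc by simp
    have "(\<Sum>j\<in>{2^m..<2^(Suc M)}. a j) = (\<Sum>j\<in>{2^m..<2^M}. a j) + (\<Sum>j\<in>{2^M..<2^(Suc M)}. a j)"
      by (rule sum.atLeastLessThan_concat[symmetric]) (use mM in \<open>auto intro: power_increasing\<close>)
    then show ?thesis using Suc.IH[OF mM] mM by simp
  qed
qed

lemma geom_half:
  assumes "m \<le> M"
  shows "(\<Sum>n\<in>{m..<M}. (1/2::real)^n) = 2 * (1/2)^m - 2 * (1/2)^M"
  using assms
proof (induction M)
  case 0 then show ?case by simp
next
  case (Suc M)
  show ?case
  proof (cases "m = Suc M")
    case True then show ?thesis by simp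
  next
    case False
    then have "m \<le> M" using Suc by simp
    then show ?thesis using Suc.IH by simp
  qed
qed

lemma D_imp_TC:
  assumes aE: "\<alpha> \<in> ell2"
    and D: "(\<lambda>n. 2 ^ n * blk \<alpha> n) \<longlonglongrightarrow> (0::real)"
  shows "(\<lambda>k. (real k + 1) * tl2 (\<lambda>n. (cmod (\<alpha> n))\<^sup>2) k) \<longlonglongrightarrow> 0"
proof (rule LIMSEQ_I)
  define a where "a = (\<lambda>n. (cmod (\<alpha> n))\<^sup>2)"
  have sa: "summable a" using aE unfolding ell2_def a_def by simp
  have a0: "\<And>k. a k \<ge> 0" unfolding a_def by simp
  fix e :: real assume e0: "e > 0"
  define \<delta> where "\<delta> = e / 8"
  have d0: "\<delta> > 0" unfolding \<delta>_def using e0 by simp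
  obtain m0 where m0: "\<And>n. n \<ge> m0 \<Longrightarrow> norm (2 ^ n * blk \<alpha> n - 0) < \<delta>"
    using LIMSEQ_D[OF D d0] by blast
  have bb: "blk \<alpha> n \<le> \<delta> * (1/2)^n" if "n \<ge> m0" for n
  proof -
    have "2 ^ n * blk \<alpha> n < \<delta>" using m0[OF that] by simp
    then show ?thesis by (simp add: power_one_over field_simps)
  qed
  have tb: "tl2 a (2^m) \<le> 2 * \<delta> * (1/2)^m" if "m \<ge> m0" for m
  proof -
    have sm: "summable (\<lambda>i. a (i + 2^m))" using summable_ignore_initial_segment[OF sa] by simp
    have "(\<Sum>i<K. a (i + 2^m)) \<le> 2 * \<delta> * (1/2)^m" for K
    proof -
      define M where "M = m + K"
      have K1: "K \<le> 2^M - 2^m"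
      proof -
        have "K < 2^K" by (rule less_exp)
        then have "K \<le> 2^K - 1" by linarith
        also have "\<dots> \<le> 2^m * (2^K - 1)" by simp
        also have "\<dots> = 2^M - 2^m" unfolding M_def by (simp add: power_add algebra_simps)
        finally show ?thesis .
      qed
      have mM: "2^m \<le> (2::nat)^M" unfolding M_def by (simp add: power_increasing)
      have "(\<Sum>i<K. a (i + 2^m)) \<le> (\<Sum>i<2^M - 2^m. a (i + 2^m))"
        by (rule sum_mono2) (use K1 a0 in auto)
      also have "(\<Sum>i<2^M - 2^m. a (i + 2^m)) = (\<Sum>j\<in>{2^m..<2^M}. a j)"
      proof -
        have "(\<Sum>j\<in>{0 + 2^m..<(2^M - 2^m) + 2^m}. a j) = (\<Sum>i\<in>{0..<2^M - 2^m}. a (i + 2^m))"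
          by (rule sum.shift_bounds_nat_ivl)
        then show ?thesis using mM by (simp add: atLeast0LessThan)
      qed
      also have "\<dots> = (\<Sum>n\<in>{m..<M}. \<Sum>j\<in>{2^n..<2^(Suc n)}. a j)"
        by (rule blocks_sum) (simp add: M_def)
      also have "\<dots> \<le> (\<Sum>n\<in>{m..<M}. \<delta> * (1/2)^n)"
        by (rule sum_mono) (use bb that in \<open>auto simp: blk_def a_def\<close>)
      also have "\<dots> = \<delta> * (2 * (1/2)^m - 2 * (1/2)^M)"
        by (simp add: sum_distrib_left[symmetric] geom_half M_def)
      also have "\<dots> \<le> 2 * \<delta> * (1/2)^m" using d0 by (simp add: algebra_simps)
      finally show ?thesis .
    qed
    then show ?thesis unfolding tl2_def by (rule suminf_le_const[OF sm])
  qed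
  show "\<exists>no. \<forall>k\<ge>no. norm ((real k + 1) * tl2 (\<lambda>n. (cmod (\<alpha> n))\<^sup>2) k - 0) < e"
  proof (intro exI allI impI)
    fix k :: nat assume k: "k \<ge> 2^m0"
    then have "k \<ge> 1" by (metis le_trans one_le_numeral one_le_power)
    then obtain m where m: "2^m \<le> k" "k < 2^(m+1)" using ex_power_ivl1[of 2 k] by auto
    have "m0 < m + 1" using k m(2) by (metis le_less_trans nat_power_less_imp_less zero_less_numeral)
    then have mm: "m \<ge> m0" by simp
    have t0: "tl2 a k \<ge> 0" using tl2_nonneg[OF sa a0] .
    have "tl2 a k \<le> tl2 a (2^m)" by (rule tl2_mono[OF sa a0 m(1)])
    also have "\<dots> \<le> 2 * \<delta> * (1/2)^m" by (rule tb[OF mm])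
    finally have t1: "tl2 a k \<le> 2 * \<delta> * (1/2)^m" .
    have k1: "real k + 1 \<le> 2^(m+1)"
    proof -
      have "k + 1 \<le> 2^(m+1)" using m(2) by simp
      then have "real (k + 1) \<le> real (2^(m+1))" by (rule of_nat_mono)
      then show ?thesis by simp
    qed
    have "(real k + 1) * tl2 a k \<le> 2^(m+1) * (2 * \<delta> * (1/2)^m)"
      using k1 t1 t0 by (intro mult_mono) auto
    also have "\<dots> = 4 * \<delta>" by (simp add: power_one_over field_simps)
    finally have "(real k + 1) * tl2 a k \<le> 4 * \<delta>" .
    moreover have "(real k + 1) * tl2 a k \<ge> 0" using t0 by simp
    ultimately show "norm ((real k + 1) * tl2 (\<lambda>n. (cmod (\<alpha> n))\<^sup>2) k - 0) < e"
      unfolding a_def[symmetric] \<delta>_def using e0 by simp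
  qed
qed

lemma C_imp_D:
  assumes C: "compact_op_ell2 (rhaly \<alpha>)"
  shows "(\<lambda>n. 2 ^ n * blk \<alpha> n) \<longlonglongrightarrow> (0::real)"
proof -
  have C1: "\<And>x. x \<in> ell2 \<Longrightarrow> rhaly \<alpha> x \<in> ell2" using C unfolding compact_op_ell2_def by blast
  have C2: "\<And>X B. (\<forall>m. X m \<in> ell2 \<and> ell2_norm (X m) \<le> B) \<Longrightarrow>
        (\<exists>(r::nat\<Rightarrow>nat) y. strict_mono r \<and> y \<in> ell2 \<and>
               (\<lambda>m. ell2_norm (rhaly \<alpha> (X (r m)) - y)) \<longlonglongrightarrow> 0)"
    using C unfolding compact_op_ell2_def by blast
  define c where "c n = 1 / sqrt (2 ^ n :: real)" for n
  define I where "I n = {(2::nat)^n..<2^(n+1)}" for n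
  define fv where "fv n j = (if j \<in> I n then complex_of_real (c n) else 0)" for n j
  have cI: "card (I n) = 2^n" for n unfolding I_def by simp
  have c2: "(c n)\<^sup>2 * 2^n = 1" for n unfolding c_def by (simp add: power_divide)
  have c0: "c n \<ge> 0" for n unfolding c_def by simp
  have fvE: "fv n \<in> ell2" and fvN: "ell2_norm (fv n) \<le> 1" for n
  proof -
    have z: "\<And>j. j \<notin> I n \<Longrightarrow> (cmod (fv n j))\<^sup>2 = 0" unfolding fv_def by simp
    have "finite (I n)" unfolding I_def by simp
    show "fv n \<in> ell2" unfolding ell2_def using summable_finite[OF \<open>finite (I n)\<close> z] by simp
    have "(\<Sum>j. (cmod (fv n j))\<^sup>2) = (\<Sum>j\<in>I n. (cmod (fv n j))\<^sup>2)"
      by (rule suminf_finite[OF \<open>finite (I n)\<close> z])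
    also have "\<dots> = (\<Sum>j\<in>I n. (c n)\<^sup>2)" by (rule sum.cong) (auto simp: fv_def c0)
    also have "\<dots> = 1" using cI c2 by (simp add: mult.commute)
    finally show "ell2_norm (fv n) \<le> 1" unfolding ell2_norm_def by simp
  qed
  have R0: "rhaly \<alpha> (fv n) k = 0" if "k < 2^n" for n k
  proof -
    have "(\<Sum>j\<le>k. fv n j) = 0" using that unfolding fv_def I_def by (intro sum.neutral) auto
    then show ?thesis unfolding rhaly_def by simp
  qed
  have R1: "(cmod (rhaly \<alpha> (fv n) k))\<^sup>2 = 2^n * (cmod (\<alpha> k))\<^sup>2" if "k \<ge> 2^(n+1)" for n k
  proof -
    have "(\<Sum>j\<le>k. fv n j) = (\<Sum>j\<in>{..k} \<inter> I n. complex_of_real (c n))"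
      unfolding fv_def by (simp add: sum.inter_restrict[symmetric])
    also have "{..k} \<inter> I n = I n" using that unfolding I_def by auto
    finally have "(\<Sum>j\<le>k. fv n j) = of_nat (2^n) * complex_of_real (c n)" using cI by simp
    then have "(cmod (rhaly \<alpha> (fv n) k))\<^sup>2 = (cmod (\<alpha> k))\<^sup>2 * (2^n)\<^sup>2 * (c n)\<^sup>2"
      unfolding rhaly_def using c0 by (simp add: norm_mult power_mult_distrib norm_power)
    also have "\<dots> = 2^n * (cmod (\<alpha> k))\<^sup>2 * ((c n)\<^sup>2 * 2^n)" by (simp add: power2_eq_square)
    finally show ?thesis using c2 by simp
  qed
  define u where "u n = (\<Sum>k. (cmod (rhaly \<alpha> (fv n) k))\<^sup>2)" for n
  have su: "summable (\<lambda>k. (cmod (rhaly \<alpha> (fv n) k))\<^sup>2)" for n using C1[OF fvE] unfolding ell2_def by simp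
  have u0: "u n \<ge> 0" for n unfolding u_def using su by (intro suminf_nonneg) auto
  have ub: "2^(Suc n) * blk \<alpha> (Suc n) \<le> 2 * u n" for n
  proof -
    have "2^n * blk \<alpha> (Suc n) = (\<Sum>k\<in>{2^(Suc n)..<2^(Suc n + 1)}. (cmod (rhaly \<alpha> (fv n) k))\<^sup>2)"
      unfolding blk_def by (simp add: sum_distrib_left R1)
    also have "\<dots> \<le> u n" unfolding u_def by (rule sum_le_suminf[OF su]) auto
    finally show ?thesis by simp
  qed
  have ulim: "u \<longlonglongrightarrow> 0"
  proof (rule ccontr)
    assume nl: "\<not> u \<longlonglongrightarrow> 0"
    have "\<exists>e>0. infinite {n. u n \<ge> e}"
    proof (rule ccontr)
      assume "\<not> (\<exists>e>0. infinite {n. u n \<ge> e})"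
      then have fin: "\<And>e. e > 0 \<Longrightarrow> finite {n. u n \<ge> e}" by blast
      have "u \<longlonglongrightarrow> 0"
      proof (rule LIMSEQ_I)
        fix e :: real assume "e > 0"
        from fin[OF this] obtain N where "\<forall>n\<in>{n. u n \<ge> e}. n < N"
          using finite_nat_set_iff_bounded by blast
        then have "\<forall>n\<ge>N. u n < e" by (meson leD mem_Collect_eq not_le)
        then show "\<exists>no. \<forall>n\<ge>no. norm (u n - 0) < e" using u0 by auto
      qed
      then show False using nl by blast
    qed
    then obtain e where e0: "e > 0" and inf: "infinite {n. u n \<ge> e}" by blast
    obtain s :: "nat \<Rightarrow> nat" where s: "strict_mono s" "\<And>n. s n \<in> {n. u n \<ge> e}"
      using infinite_enumerate[OF inf] by blast
    define X where "X m = fv (s m)" for m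
    have "\<forall>m. X m \<in> ell2 \<and> ell2_norm (X m) \<le> 1" unfolding X_def using fvE fvN by blast
    then obtain r y where r: "strict_mono r" and yE: "y \<in> ell2"
      and lim: "(\<lambda>m. ell2_norm (rhaly \<alpha> (X (r m)) - y)) \<longlonglongrightarrow> 0"
      using C2 by blast
    have diffE: "rhaly \<alpha> (X (r m)) - y \<in> ell2" for m
      using ell2_diff(1)[OF C1[OF fvE] yE] unfolding X_def by blast
    have y0: "y k = 0" for k
    proof -
      have ev: "\<forall>m\<ge>Suc k. cmod (y k) \<le> ell2_norm (rhaly \<alpha> (X (r m)) - y)"
      proof (intro allI impI)
        fix m assume m: "m \<ge> Suc k"
        have "m \<le> s (r m)" using seq_suble[OF strict_mono_o[OF s(1) r]] by (simp add: o_def)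
        then have "k < 2 ^ s (r m)" using m less_exp[of "s (r m)"] by linarith
        then have "rhaly \<alpha> (X (r m)) k = 0" unfolding X_def by (rule R0)
        then have "cmod (y k) = cmod ((rhaly \<alpha> (X (r m)) - y) k)" by simp
        also have "\<dots> \<le> ell2_norm (rhaly \<alpha> (X (r m)) - y)" by (rule ell2_coord_le[OF diffE])
        finally show "cmod (y k) \<le> ell2_norm (rhaly \<alpha> (X (r m)) - y)" .
      qed
      have "cmod (y k) \<le> 0" by (rule LIMSEQ_le_const[OF lim]) (use ev in blast)
      then show ?thesis by simp
    qed
    then have "y = (\<lambda>_. 0)" by auto
    moreover have "\<And>f::nat\<Rightarrow>complex. f - (\<lambda>_. 0) = f" by (simp add: fun_eq_iff)
    ultimately have lim2: "(\<lambda>m. ell2_norm (rhaly \<alpha> (X (r m)))) \<longlonglongrightarrow> 0" using lim by simp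
    have "sqrt e > 0" using e0 by simp
    from LIMSEQ_D[OF lim2 this] obtain M where M: "\<And>m. m \<ge> M \<Longrightarrow> norm (ell2_norm (rhaly \<alpha> (X (r m))) - 0) < sqrt e"
      by blast
    have "ell2_norm (rhaly \<alpha> (X (r M))) = sqrt (u (s (r M)))" unfolding X_def u_def ell2_norm_def by simp
    moreover have "sqrt (u (s (r M))) \<ge> sqrt e" using s(2)[of "r M"] by simp
    moreover have "sqrt (u (s (r M))) \<ge> 0" using u0 by simp
    ultimately show False using M[of M] by simp
  qed
  have "(\<lambda>n. 2^(Suc n) * blk \<alpha> (Suc n)) \<longlonglongrightarrow> (0::real)"
  proof (rule tendsto_sandwich[where f="\<lambda>_. 0" and h="\<lambda>n. 2 * u n"])
    show "\<forall>\<^sub>F n in sequentially. 0 \<le> 2 ^ Suc n * blk \<alpha> (Suc n)" unfolding blk_def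
      by (intro always_eventually allI mult_nonneg_nonneg sum_nonneg) auto
    show "\<forall>\<^sub>F n in sequentially. 2 ^ Suc n * blk \<alpha> (Suc n) \<le> 2 * u n" using ub by simp
    show "(\<lambda>n. 0::real) \<longlonglongrightarrow> 0" by simp
    show "(\<lambda>n. 2 * u n) \<longlonglongrightarrow> 0" using tendsto_mult_right_zero[OF ulim, of 2] by simp
  qed
  then show ?thesis by (rule LIMSEQ_imp_Suc)
qed

definition Q :: "(real \<Rightarrow> complex) \<Rightarrow> real" where
  "Q h = integral {0..2*pi} (\<lambda>\<theta>. (cmod (h \<theta>))\<^sup>2)"

lemma L2T_HK:
  assumes "h \<in> L2T"
  shows "(\<lambda>\<theta>. (cmod (h \<theta>))\<^sup>2) integrable_on {0..2*pi}" "L2T_norm h = sqrt (Q h / (2*pi))"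
proof -
  have si: "set_integrable lborel {0..2*pi} (\<lambda>\<theta>. (cmod (h \<theta>))\<^sup>2)" using assms unfolding L2T_def by blast
  show "(\<lambda>\<theta>. (cmod (h \<theta>))\<^sup>2) integrable_on {0..2*pi}" using set_borel_integral_eq_integral(1)[OF si] .
  show "L2T_norm h = sqrt (Q h / (2*pi))"
    unfolding L2T_norm_def Q_def using set_borel_integral_eq_integral(2)[OF si] by simp
qed

lemma L2T_I:
  assumes meas: "h \<in> borel_measurable lborel" and per: "\<And>\<theta>. h (\<theta> + 2*pi) = h \<theta>"
    and int: "(\<lambda>\<theta>. (cmod (h \<theta>))\<^sup>2) integrable_on {0..2*pi}"
  shows "h \<in> L2T"
proof -
  note meas[measurable]
  have "(\<lambda>\<theta>. (cmod (h \<theta>))\<^sup>2) absolutely_integrable_on {0..2*pi}"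
    by (rule nonnegative_absolutely_integrable_1[OF int]) simp
  then have i1: "integrable lebesgue (\<lambda>x. indicator {0..2*pi} x *\<^sub>R (cmod (h x))\<^sup>2)"
    unfolding set_integrable_def .
  have m: "(\<lambda>x. indicator {0..2*pi} x *\<^sub>R (cmod (h x))\<^sup>2) \<in> borel_measurable lborel" by measurable
  have "integrable lborel (\<lambda>x. indicator {0..2*pi} x *\<^sub>R (cmod (h x))\<^sup>2)"
    using integrable_completion[OF m] i1 by simp
  then have "set_integrable lborel {0..2*pi} (\<lambda>\<theta>. (cmod (h \<theta>))\<^sup>2)" unfolding set_integrable_def .
  then show ?thesis unfolding L2T_def using meas per by simp
qed

lemma cmod_lin_sq_le:
  "(cmod (a * x + b * y))\<^sup>2 \<le> 2 * (cmod a)\<^sup>2 * (cmod x)\<^sup>2 + 2 * (cmod b)\<^sup>2 * (cmod y)\<^sup>2"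
proof -
  have "cmod (a * x + b * y) \<le> cmod a * cmod x + cmod b * cmod y"
    by (metis norm_mult norm_triangle_ineq)
  then have "(cmod (a * x + b * y))\<^sup>2 \<le> (cmod a * cmod x + cmod b * cmod y)\<^sup>2" by (simp add: power_mono)
  also have "\<dots> \<le> 2 * (cmod a * cmod x)\<^sup>2 + 2 * (cmod b * cmod y)\<^sup>2"
    using sum_squares_bound[of "cmod a * cmod x" "cmod b * cmod y"] by (simp add: power2_eq_square algebra_simps)
  finally show ?thesis by (simp add: power_mult_distrib)
qed

lemma L2T_lin:
  assumes "u \<in> L2T" "v \<in> L2T"
  shows "(\<lambda>\<theta>. a * u \<theta> + b * v \<theta>) \<in> L2T"
proof -
  have mu[measurable]: "u \<in> borel_measurable lborel" and mv[measurable]: "v \<in> borel_measurable lborel"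
    using assms unfolding L2T_def by auto
  have iu: "set_integrable lborel {0..2*pi} (\<lambda>\<theta>. (cmod (u \<theta>))\<^sup>2)"
    and iv: "set_integrable lborel {0..2*pi} (\<lambda>\<theta>. (cmod (v \<theta>))\<^sup>2)" using assms unfolding L2T_def by auto
  have i: "set_integrable lborel {0..2*pi} (\<lambda>\<theta>. 2 * (cmod a)\<^sup>2 * (cmod (u \<theta>))\<^sup>2 + 2 * (cmod b)\<^sup>2 * (cmod (v \<theta>))\<^sup>2)"
  proof (rule set_integral_add(1))
    show "set_integrable lborel {0..2*pi} (\<lambda>\<theta>. 2 * (cmod a)\<^sup>2 * (cmod (u \<theta>))\<^sup>2)"
      by (rule set_integrable_mult_right) (rule iu)
    show "set_integrable lborel {0..2*pi} (\<lambda>\<theta>. 2 * (cmod b)\<^sup>2 * (cmod (v \<theta>))\<^sup>2)"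
      by (rule set_integrable_mult_right) (rule iv)
  qed
  have "set_integrable lborel {0..2*pi} (\<lambda>\<theta>. (cmod (a * u \<theta> + b * v \<theta>))\<^sup>2)"
  proof (rule set_integrable_bound[OF i])
    show "set_borel_measurable lborel {0..2*pi} (\<lambda>\<theta>. (cmod (a * u \<theta> + b * v \<theta>))\<^sup>2)"
      unfolding set_borel_measurable_def by measurable
    show "AE x in lborel. x \<in> {0..2*pi} \<longrightarrow> norm ((cmod (a * u x + b * v x))\<^sup>2)
        \<le> norm (2 * (cmod a)\<^sup>2 * (cmod (u x))\<^sup>2 + 2 * (cmod b)\<^sup>2 * (cmod (v x))\<^sup>2)"
    proof (intro AE_I2 impI)
      fix x
      have "0 \<le> 2 * (cmod a)\<^sup>2 * (cmod (u x))\<^sup>2 + 2 * (cmod b)\<^sup>2 * (cmod (v x))\<^sup>2" by simp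
      then show "norm ((cmod (a * u x + b * v x))\<^sup>2)
        \<le> norm (2 * (cmod a)\<^sup>2 * (cmod (u x))\<^sup>2 + 2 * (cmod b)\<^sup>2 * (cmod (v x))\<^sup>2)"
        using cmod_lin_sq_le[of a "u x" b "v x"] by (simp only: real_norm_def abs_of_nonneg zero_le_power2)
    qed
  qed
  moreover have "(\<lambda>\<theta>. a * u \<theta> + b * v \<theta>) \<in> borel_measurable lborel" by measurable
  moreover have "\<forall>\<theta>. a * u (\<theta> + 2*pi) + b * v (\<theta> + 2*pi) = a * u \<theta> + b * v \<theta>"
    using assms unfolding L2T_def by auto
  ultimately show ?thesis unfolding L2T_def by (intro CollectI conjI)
qed

lemma L2T_diff:
  assumes "u \<in> L2T" "v \<in> L2T"
  shows "(\<lambda>\<theta>. u \<theta> - v \<theta>) \<in> L2T"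
  using L2T_lin[OF assms, of 1 "-1"] by simp

lemma has_integral_shift_real:
  fixes f :: "real \<Rightarrow> 'b::euclidean_space"
  assumes "(f has_integral i) {a..b}"
  shows "((\<lambda>x. f (x + c)) has_integral i) {a - c..b - c}"
  using has_integral_affinity'[of f i a b 1 c] assms by (simp add: cbox_interval)

lemma per_k:
  fixes q :: "real \<Rightarrow> 'b"
  assumes per: "\<And>x. q (x + 2*pi) = q x"
  shows "q (x + 2*pi* of_int k) = q x"
proof -
  have nat: "q (y + 2*pi* of_nat n) = q y" for y n
  proof (induction n)
    case 0 then show ?case by simp
  next
    case (Suc n)
    have "q (y + 2*pi* of_nat (Suc n)) = q ((y + 2*pi* of_nat n) + 2*pi)" by (simp add: algebra_simps)
    also have "\<dots> = q (y + 2*pi* of_nat n)" by (rule per)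
    finally show ?case using Suc by simp
  qed
  show ?thesis
  proof (cases "k \<ge> 0")
    case True
    then obtain n where "k = int n" by (rule nonneg_int_cases)
    then show ?thesis using nat[of x n] by simp
  next
    case False
    then have "0 \<le> - k" by simp
    then obtain n where "- k = int n" by (rule nonneg_int_cases)
    then have kn: "k = - int n" by simp
    have "q x = q ((x + 2*pi* of_int k) + 2*pi* of_nat n)" using kn by simp
    also have "\<dots> = q (x + 2*pi* of_int k)" by (rule nat)
    finally show ?thesis by simp
  qed
qed

lemma per_int:
  fixes q :: "real \<Rightarrow> real"
  assumes per: "\<And>x. q (x + 2*pi) = q x" and int: "q integrable_on {0..2*pi}"
  shows "(q has_integral integral {0..2*pi} q) {a..a + 2*pi}"
proof -
  define k where "k = \<lfloor>a / (2*pi)\<rfloor>"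
  define b where "b = a - 2*pi* of_int k"
  have k1: "of_int k \<le> a / (2*pi)" and k2: "a / (2*pi) < of_int k + 1" unfolding k_def by linarith+
  have p0: "2*pi > 0" by simp
  have b0: "0 \<le> b" unfolding b_def using k1 p0 by (simp add: field_simps)
  have b1: "b \<le> 2*pi" unfolding b_def using k2 p0 by (simp add: field_simps)
  have i1: "q integrable_on {0..b}" by (rule integrable_subinterval_real[OF int]) (use b1 in auto)
  have i2: "q integrable_on {b..2*pi}" by (rule integrable_subinterval_real[OF int]) (use b0 in auto)
  have sum: "integral {0..b} q + integral {b..2*pi} q = integral {0..2*pi} q"
    by (rule Henstock_Kurzweil_Integration.integral_combine[OF b0 b1 int])
  have h2: "(q has_integral integral {b..2*pi} q) {a..2*pi*(of_int k + 1)}"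
  proof -
    have "((\<lambda>x. q (x + - (2*pi* of_int k))) has_integral integral {b..2*pi} q) {b - - (2*pi* of_int k)..2*pi - - (2*pi* of_int k)}"
      by (rule has_integral_shift_real) (use i2 in auto)
    moreover have "q (x + - (2*pi* of_int k)) = q x" for x
    proof -
      have "q (x + - (2*pi* of_int k)) = q (x + 2*pi * of_int (-k))" by simp
      also have "\<dots> = q x" by (rule per_k[where q=q, OF per])
      finally show ?thesis .
    qed
    ultimately show ?thesis unfolding b_def by (simp add: algebra_simps)
  qed
  have h1: "(q has_integral integral {0..b} q) {2*pi*(of_int k + 1)..a + 2*pi}"
  proof -
    have "((\<lambda>x. q (x + - (2*pi* of_int (k+1)))) has_integral integral {0..b} q) {0 - - (2*pi* of_int (k+1))..b - - (2*pi* of_int (k+1))}"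
      by (rule has_integral_shift_real) (use i1 in auto)
    moreover have "q (x + - (2*pi* of_int (k+1))) = q x" for x
    proof -
      have "q (x + - (2*pi* of_int (k+1))) = q (x + 2*pi * of_int (-(k+1)))" by (simp only: of_int_minus mult_minus_right)
      also have "\<dots> = q x" by (rule per_k[where q=q, OF per])
      finally show ?thesis .
    qed
    ultimately show ?thesis unfolding b_def by (simp add: algebra_simps)
  qed
  have c1: "a \<le> 2*pi*(of_int k + 1)" using k2 p0 by (simp add: field_simps)
  have c2: "2*pi*(of_int k + 1) \<le> a + 2*pi" using k1 p0 by (simp add: field_simps)
  have "(q has_integral (integral {b..2*pi} q + integral {0..b} q)) {a..a + 2*pi}"
    by (rule has_integral_combine[OF c1 c2 h2 h1])
  then show ?thesis using sum by (simp add: add.commute)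
qed

lemma L2T_shift:
  assumes "h \<in> L2T"
  shows "(\<lambda>\<theta>. h (\<theta> - t)) \<in> L2T" "Q (\<lambda>\<theta>. h (\<theta> - t)) = Q h"
proof -
  have m[measurable]: "h \<in> borel_measurable lborel" using assms unfolding L2T_def by auto
  have per: "\<And>\<theta>. h (\<theta> + 2*pi) = h \<theta>" using assms unfolding L2T_def by auto
  define q where "q \<theta> = (cmod (h \<theta>))\<^sup>2" for \<theta>
  have qper: "q (x + 2*pi) = q x" for x unfolding q_def using per by simp
  have qi: "q integrable_on {0..2*pi}" unfolding q_def using L2T_HK(1)[OF assms] .
  have "(q has_integral integral {0..2*pi} q) {-t..-t + 2*pi}" by (rule per_int[OF qper qi])
  from has_integral_shift_real[OF this, of "-t"]
  have hi: "((\<lambda>x. q (x - t)) has_integral integral {0..2*pi} q) {0..2*pi}" by simp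
  have "(\<lambda>\<theta>. h (\<theta> - t)) \<in> borel_measurable lborel" by measurable
  moreover have "h ((\<theta> + 2*pi) - t) = h (\<theta> - t)" for \<theta> using per[of "\<theta> - t"] by (simp add: algebra_simps)
  moreover have "(\<lambda>\<theta>. (cmod (h (\<theta> - t)))\<^sup>2) integrable_on {0..2*pi}" using hi unfolding q_def by blast
  ultimately show "(\<lambda>\<theta>. h (\<theta> - t)) \<in> L2T" by (intro L2T_I) auto
  show "Q (\<lambda>\<theta>. h (\<theta> - t)) = Q h" unfolding Q_def using integral_unique[OF hi] unfolding q_def by simp
qed

lemma sq_diff_bound:
  fixes a b :: complex and \<epsilon> :: real
  assumes e: "\<epsilon> > 0"
  shows "\<bar>(cmod a)\<^sup>2 - (cmod b)\<^sup>2\<bar> \<le> \<epsilon> * (cmod b)\<^sup>2 + (1 + 1/\<epsilon>) * (cmod (a - b))\<^sup>2"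
proof -
  define x where "x = cmod (a - b)"
  define y where "y = cmod b"
  define r where "r = cmod a"
  have x0: "x \<ge> 0" and y0: "y \<ge> 0" and r0: "r \<ge> 0" unfolding x_def y_def r_def by auto
  have ry: "\<bar>r - y\<bar> \<le> x" unfolding x_def y_def r_def by (rule norm_triangle_ineq3)
  have "r\<^sup>2 - y\<^sup>2 = (r - y) * (r + y)" by (simp add: power2_eq_square algebra_simps)
  then have "\<bar>r\<^sup>2 - y\<^sup>2\<bar> = \<bar>r - y\<bar> * (r + y)" using r0 y0 by (simp add: abs_mult)
  also have "\<dots> \<le> x * (x + 2 * y)"
    using ry r0 y0 x0 by (intro mult_mono) auto
  also have "\<dots> = x\<^sup>2 + 2 * x * y" by (simp add: power2_eq_square algebra_simps)
  finally have A: "\<bar>r\<^sup>2 - y\<^sup>2\<bar> \<le> x\<^sup>2 + 2 * x * y" .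
  have B: "2 * x * y \<le> \<epsilon> * y\<^sup>2 + x\<^sup>2 / \<epsilon>"
  proof -
    have e1: "(\<epsilon> * y\<^sup>2 + x\<^sup>2 / \<epsilon>) * \<epsilon> = \<epsilon>\<^sup>2 * y\<^sup>2 + x\<^sup>2" using e by (simp add: field_simps power2_eq_square)
    have e2: "\<epsilon>\<^sup>2 * y\<^sup>2 + x\<^sup>2 - 2 * x * y * \<epsilon> = (\<epsilon> * y - x)\<^sup>2" by (simp add: power2_eq_square algebra_simps)
    have "0 \<le> (\<epsilon> * y - x)\<^sup>2" by simp
    then have "2 * x * y * \<epsilon> \<le> (\<epsilon> * y\<^sup>2 + x\<^sup>2 / \<epsilon>) * \<epsilon>" using e1 e2 by linarith
    then show ?thesis using e by (simp only: mult_le_cancel_right)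
  qed
  have "\<epsilon> * y\<^sup>2 + x\<^sup>2 / \<epsilon> + x\<^sup>2 = \<epsilon> * y\<^sup>2 + (1 + 1/\<epsilon>) * x\<^sup>2" by (simp add: algebra_simps)
  then have "\<bar>r\<^sup>2 - y\<^sup>2\<bar> \<le> \<epsilon> * y\<^sup>2 + (1 + 1/\<epsilon>) * x\<^sup>2" using A B by linarith
  then show ?thesis unfolding x_def y_def r_def .
qed

lemma Q_nonneg: "h \<in> L2T \<Longrightarrow> Q h \<ge> 0"
  unfolding Q_def by (rule integral_nonneg[OF L2T_HK(1)]) auto

lemma Q_close:
  assumes u: "u \<in> L2T" and v: "v \<in> L2T" and e: "\<epsilon> > 0"
  shows "\<bar>Q u - Q v\<bar> \<le> \<epsilon> * Q v + (1 + 1/\<epsilon>) * Q (\<lambda>\<theta>. u \<theta> - v \<theta>)"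
proof -
  have uv: "(\<lambda>\<theta>. u \<theta> - v \<theta>) \<in> L2T" by (rule L2T_diff[OF u v])
  have iu: "((\<lambda>\<theta>. (cmod (u \<theta>))\<^sup>2) has_integral Q u) {0..2*pi}"
    unfolding Q_def using L2T_HK(1)[OF u] by (rule integrable_integral)
  have iv: "((\<lambda>\<theta>. (cmod (v \<theta>))\<^sup>2) has_integral Q v) {0..2*pi}"
    unfolding Q_def using L2T_HK(1)[OF v] by (rule integrable_integral)
  have iuv: "((\<lambda>\<theta>. (cmod (u \<theta> - v \<theta>))\<^sup>2) has_integral Q (\<lambda>\<theta>. u \<theta> - v \<theta>)) {0..2*pi}"
    unfolding Q_def using L2T_HK(1)[OF uv] by (rule integrable_integral)
  have i1: "((\<lambda>\<theta>. (cmod (u \<theta>))\<^sup>2 - (cmod (v \<theta>))\<^sup>2) has_integral (Q u - Q v)) {0..2*pi}"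
    by (rule has_integral_diff[OF iu iv])
  have i2: "((\<lambda>\<theta>. \<epsilon> * (cmod (v \<theta>))\<^sup>2 + (1 + 1/\<epsilon>) * (cmod (u \<theta> - v \<theta>))\<^sup>2) has_integral
      (\<epsilon> * Q v + (1 + 1/\<epsilon>) * Q (\<lambda>\<theta>. u \<theta> - v \<theta>))) {0..2*pi}"
    by (rule has_integral_add[OF has_integral_mult_right[OF iv] has_integral_mult_right[OF iuv]])
  have "norm (integral {0..2*pi} (\<lambda>\<theta>. (cmod (u \<theta>))\<^sup>2 - (cmod (v \<theta>))\<^sup>2))
      \<le> integral {0..2*pi} (\<lambda>\<theta>. \<epsilon> * (cmod (v \<theta>))\<^sup>2 + (1 + 1/\<epsilon>) * (cmod (u \<theta> - v \<theta>))\<^sup>2)"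
  proof (rule integral_norm_bound_integral)
    show "(\<lambda>\<theta>. (cmod (u \<theta>))\<^sup>2 - (cmod (v \<theta>))\<^sup>2) integrable_on {0..2*pi}"
      using i1 by (rule has_integral_integrable)
    show "(\<lambda>\<theta>. \<epsilon> * (cmod (v \<theta>))\<^sup>2 + (1 + 1/\<epsilon>) * (cmod (u \<theta> - v \<theta>))\<^sup>2) integrable_on {0..2*pi}"
      using i2 by (rule has_integral_integrable)
    fix x
    show "norm ((cmod (u x))\<^sup>2 - (cmod (v x))\<^sup>2) \<le> \<epsilon> * (cmod (v x))\<^sup>2 + (1 + 1/\<epsilon>) * (cmod (u x - v x))\<^sup>2"
      using sq_diff_bound[OF e, of "u x" "v x"] by (simp only: real_norm_def)
  qed
  then have "norm (Q u - Q v) \<le> \<epsilon> * Q v + (1 + 1/\<epsilon>) * Q (\<lambda>\<theta>. u \<theta> - v \<theta>)"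
    unfolding integral_unique[OF i1] integral_unique[OF i2] .
  then show ?thesis by (simp only: real_norm_def)
qed

lemma trig_cont: "continuous_on A (\<lambda>\<theta>::real. \<Sum>n<N. c n * exp (\<i> * of_nat n * of_real \<theta>))"
  by (intro continuous_intros)

lemma exp_per: "exp (\<i> * of_nat n * of_real (\<theta> + 2*pi)) = exp (\<i> * of_nat n * of_real \<theta>)"
proof -
  have "\<i> * of_nat n * of_real (\<theta> + 2*pi) = \<i> * of_nat n * of_real \<theta> + \<i> * (of_nat n * (of_real pi * 2))"
    by (simp add: algebra_simps)
  then have "exp (\<i> * of_nat n * of_real (\<theta> + 2*pi)) = exp (\<i> * of_nat n * of_real \<theta>) * exp (\<i> * (of_nat n * (of_real pi * 2)))"
    by (simp only: exp_add)
  then show ?thesis by (simp only: exp_2pi_1_nat mult_1_right)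
qed

lemma trig_L2T: "(\<lambda>\<theta>. \<Sum>n<N. c n * exp (\<i> * of_nat n * of_real \<theta>)) \<in> L2T"
proof (rule L2T_I)
  have "(\<lambda>\<theta>::real. \<Sum>n<N. c n * exp (\<i> * of_nat n * of_real \<theta>)) \<in> borel_measurable borel"
    by (rule borel_measurable_continuous_onI[OF trig_cont])
  then show "(\<lambda>\<theta>. \<Sum>n<N. c n * exp (\<i> * of_nat n * of_real \<theta>)) \<in> borel_measurable lborel" by simp
  show "(\<Sum>n<N. c n * exp (\<i> * of_nat n * of_real (\<theta> + 2 * pi))) = (\<Sum>n<N. c n * exp (\<i> * of_nat n * of_real \<theta>))" for \<theta>
    by (simp only: exp_per)
  show "(\<lambda>\<theta>. (cmod (\<Sum>n<N. c n * exp (\<i> * of_nat n * of_real \<theta>)))\<^sup>2) integrable_on {0..2 * pi}"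
    by (intro integrable_continuous_interval continuous_intros)
qed

lemma exp_prod_cnj:
  "exp (\<i> * of_nat n * of_real \<theta>) * cnj (exp (\<i> * of_nat m * of_real \<theta>)) = exp ((\<i> * (of_nat n - of_nat m)) * of_real \<theta>)"
proof -
  have "cnj (exp (\<i> * of_nat m * of_real \<theta>)) = exp (- (\<i> * of_nat m * of_real \<theta>))" by (simp add: exp_cnj)
  then show ?thesis by (simp add: exp_add[symmetric] algebra_simps)
qed

lemma exp_int_0_2pi:
  "integral {0..2*pi} (\<lambda>\<theta>. exp ((\<i> * (of_nat n - of_nat m)) * complex_of_real \<theta>)) = (if n = m then 2*pi else 0)"
proof (cases "n = m")
  case True then show ?thesis by (simp add: scaleR_conv_of_real)
next
  case False
  have a0: "\<i> * (of_nat n - of_nat m) \<noteq> (0::complex)" using False by simp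
  have "integral {0..2*pi} (\<lambda>\<theta>. exp ((\<i> * (of_nat n - of_nat m)) * complex_of_real \<theta>))
      = (exp ((\<i> * (of_nat n - of_nat m)) * of_real (2*pi)) - 1) / (\<i> * (of_nat n - of_nat m))"
    by (rule integral_exp) (use a0 in auto)
  also have "exp ((\<i> * (of_nat n - of_nat m)) * of_real (2*pi)) = exp (\<i> * (of_int (int n - int m) * (of_real pi * 2)))"
    by (simp add: algebra_simps)
  also have "\<dots> = 1" by (rule exp_2pi_1_int)
  finally show ?thesis using False by simp
qed

lemma trig_Q: "Q (\<lambda>\<theta>. \<Sum>n<N. c n * exp (\<i> * of_nat n * of_real \<theta>)) = 2*pi * (\<Sum>n<N. (cmod (c n))\<^sup>2)"
proof -
  define P where "P \<theta> = (\<Sum>n<N. c n * exp (\<i> * of_nat n * of_real \<theta>))" for \<theta>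
  define E where "E n m \<theta> = exp ((\<i> * (of_nat n - of_nat m)) * complex_of_real \<theta>)" for n m :: nat and \<theta> :: real
  have F: "complex_of_real ((cmod (P \<theta>))\<^sup>2) = (\<Sum>n<N. \<Sum>m<N. (c n * cnj (c m)) * E n m \<theta>)" for \<theta>
  proof -
    have "complex_of_real ((cmod (P \<theta>))\<^sup>2) = P \<theta> * cnj (P \<theta>)" by (rule complex_norm_square)
    also have "\<dots> = (\<Sum>n<N. \<Sum>m<N. (c n * exp (\<i> * of_nat n * of_real \<theta>)) * cnj (c m * exp (\<i> * of_nat m * of_real \<theta>)))"
      unfolding P_def by (simp add: sum_product)
    also have "\<dots> = (\<Sum>n<N. \<Sum>m<N. (c n * cnj (c m)) * E n m \<theta>)"
      unfolding E_def using exp_prod_cnj by (simp add: algebra_simps)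
    finally show ?thesis .
  qed
  have Econt: "continuous_on {0..2*pi} (E n m)" for n m unfolding E_def by (intro continuous_intros)
  have "integral {0..2*pi} (\<lambda>\<theta>. \<Sum>n<N. \<Sum>m<N. (c n * cnj (c m)) * E n m \<theta>)
      = (\<Sum>n<N. \<Sum>m<N. (c n * cnj (c m)) * integral {0..2*pi} (E n m))"
    by (simp add: integral_sum integrable_continuous_interval Econt continuous_intros)
  also have "\<dots> = (\<Sum>n<N. \<Sum>m<N. (c n * cnj (c m)) * (if n = m then 2*pi else 0))"
    unfolding E_def exp_int_0_2pi by simp
  also have "\<dots> = (\<Sum>n<N. (c n * cnj (c n)) * (2*pi))"
    by (simp add: if_distrib sum.delta cong: if_cong)
  also have "\<dots> = (\<Sum>n<N. complex_of_real (2*pi*(cmod (c n))\<^sup>2))"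
  proof (rule sum.cong)
    fix n
    have "complex_of_real (2*pi*(cmod (c n))\<^sup>2) = complex_of_real (2*pi) * complex_of_real ((cmod (c n))\<^sup>2)"
      by (rule of_real_mult)
    also have "\<dots> = complex_of_real (2*pi) * (c n * cnj (c n))" by (simp only: complex_norm_square)
    finally show "c n * cnj (c n) * (2*pi) = complex_of_real (2*pi*(cmod (c n))\<^sup>2)" by simp
  qed simp
  also have "\<dots> = complex_of_real (2*pi * (\<Sum>n<N. (cmod (c n))\<^sup>2))"
    by (simp add: sum_distrib_left)
  finally have I1: "integral {0..2*pi} (\<lambda>\<theta>. complex_of_real ((cmod (P \<theta>))\<^sup>2)) = complex_of_real (2*pi * (\<Sum>n<N. (cmod (c n))\<^sup>2))"
    unfolding F .
  have qi: "(\<lambda>\<theta>. (cmod (P \<theta>))\<^sup>2) integrable_on {0..2*pi}"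
    unfolding P_def by (intro integrable_continuous_interval continuous_intros)
  have "((\<lambda>\<theta>. complex_of_real ((cmod (P \<theta>))\<^sup>2)) has_integral complex_of_real (Q P)) {0..2*pi}"
    unfolding Q_def by (rule has_integral_of_real[OF integrable_integral[OF qi]])
  then have "integral {0..2*pi} (\<lambda>\<theta>. complex_of_real ((cmod (P \<theta>))\<^sup>2)) = complex_of_real (Q P)"
    by (rule integral_unique)
  then have "complex_of_real (Q P) = complex_of_real (2*pi * (\<Sum>n<N. (cmod (c n))\<^sup>2))" using I1 by simp
  then show ?thesis unfolding P_def of_real_eq_iff .
qed

definition Sf :: "(nat \<Rightarrow> complex) \<Rightarrow> nat \<Rightarrow> real \<Rightarrow> complex" where
  "Sf \<alpha> N \<theta> = (\<Sum>n<N. \<alpha> n * exp (\<i> * of_nat n * of_real \<theta>))"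

definition wt :: "real \<Rightarrow> nat \<Rightarrow> real" where
  "wt t n = (cmod (exp (- (\<i> * of_nat n * of_real t)) - 1))\<^sup>2"

lemma Sf_L2T: "Sf \<alpha> N \<in> L2T"
  unfolding Sf_def[abs_def] by (rule trig_L2T)

lemma Sf_shift:
  "Sf \<alpha> N (\<theta> - t) - Sf \<alpha> N \<theta> = (\<Sum>n<N. (\<alpha> n * (exp (- (\<i> * of_nat n * of_real t)) - 1)) * exp (\<i> * of_nat n * of_real \<theta>))"
proof -
  have pt: "\<alpha> n * exp (\<i> * of_nat n * of_real (\<theta> - t)) - \<alpha> n * exp (\<i> * of_nat n * of_real \<theta>)
      = (\<alpha> n * (exp (- (\<i> * of_nat n * of_real t)) - 1)) * exp (\<i> * of_nat n * of_real \<theta>)" for n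
  proof -
    have "\<i> * of_nat n * of_real (\<theta> - t) = \<i> * of_nat n * of_real \<theta> + - (\<i> * of_nat n * of_real t)"
      by (simp add: algebra_simps)
    then have "exp (\<i> * of_nat n * of_real (\<theta> - t)) = exp (\<i> * of_nat n * of_real \<theta>) * exp (- (\<i> * of_nat n * of_real t))"
      by (simp only: exp_add)
    then show ?thesis by (simp add: algebra_simps)
  qed
  show ?thesis unfolding Sf_def sum_subtractf[symmetric] using pt by simp
qed

lemma Q_Sf_shift:
  "Q (\<lambda>\<theta>. Sf \<alpha> N (\<theta> - t) - Sf \<alpha> N \<theta>) = 2*pi * (\<Sum>n<N. (cmod (\<alpha> n))\<^sup>2 * wt t n)"
  unfolding Sf_shift trig_Q wt_def by (simp add: norm_mult power_mult_distrib)

lemma Q_diff_le: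
  assumes u: "u \<in> L2T" and v: "v \<in> L2T"
  shows "Q (\<lambda>\<theta>. u \<theta> - v \<theta>) \<le> 2 * Q u + 2 * Q v"
proof -
  have uv: "(\<lambda>\<theta>. u \<theta> - v \<theta>) \<in> L2T" by (rule L2T_diff[OF u v])
  have iu: "((\<lambda>\<theta>. (cmod (u \<theta>))\<^sup>2) has_integral Q u) {0..2*pi}"
    unfolding Q_def using L2T_HK(1)[OF u] by (rule integrable_integral)
  have iv: "((\<lambda>\<theta>. (cmod (v \<theta>))\<^sup>2) has_integral Q v) {0..2*pi}"
    unfolding Q_def using L2T_HK(1)[OF v] by (rule integrable_integral)
  have i2: "((\<lambda>\<theta>. 2 * (cmod (u \<theta>))\<^sup>2 + 2 * (cmod (v \<theta>))\<^sup>2) has_integral (2 * Q u + 2 * Q v)) {0..2*pi}"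
    by (rule has_integral_add[OF has_integral_mult_right[OF iu] has_integral_mult_right[OF iv]])
  have "Q (\<lambda>\<theta>. u \<theta> - v \<theta>) \<le> integral {0..2*pi} (\<lambda>\<theta>. 2 * (cmod (u \<theta>))\<^sup>2 + 2 * (cmod (v \<theta>))\<^sup>2)"
    unfolding Q_def
  proof (rule integral_le)
    show "(\<lambda>\<theta>. (cmod (u \<theta> - v \<theta>))\<^sup>2) integrable_on {0..2*pi}" by (rule L2T_HK(1)[OF uv])
    show "(\<lambda>\<theta>. 2 * (cmod (u \<theta>))\<^sup>2 + 2 * (cmod (v \<theta>))\<^sup>2) integrable_on {0..2*pi}"
      using i2 by (rule has_integral_integrable)
    fix x
    show "(cmod (u x - v x))\<^sup>2 \<le> 2 * (cmod (u x))\<^sup>2 + 2 * (cmod (v x))\<^sup>2"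
      using cmod_lin_sq_le[of 1 "u x" "-1" "v x"] by simp
  qed
  then show ?thesis using integral_unique[OF i2] by simp
qed

lemma Q_conv:
  assumes u: "\<And>N. u N \<in> L2T" and v: "v \<in> L2T"
    and d: "(\<lambda>N. Q (\<lambda>\<theta>. u N \<theta> - v \<theta>)) \<longlonglongrightarrow> 0"
  shows "(\<lambda>N. Q (u N)) \<longlonglongrightarrow> Q v"
proof (rule LIMSEQ_I)
  fix e :: real assume e0: "e > 0"
  have Qv: "Q v \<ge> 0" by (rule Q_nonneg[OF v])
  define \<epsilon> where "\<epsilon> = e / (2 * (Q v + 1))"
  have eps0: "\<epsilon> > 0" unfolding \<epsilon>_def using e0 Qv by simp
  have epsQ: "\<epsilon> * Q v < e / 2"
  proof -
    have "\<epsilon> * Q v = e / 2 * (Q v / (Q v + 1))" unfolding \<epsilon>_def by (simp add: field_simps)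
    also have "Q v / (Q v + 1) < 1" using Qv by simp
    then have "e / 2 * (Q v / (Q v + 1)) < e / 2 * 1" using e0 by (intro mult_strict_left_mono) auto
    finally show ?thesis by simp
  qed
  define K where "K = 1 + 1 / \<epsilon>"
  have K0: "K > 0" unfolding K_def using eps0 by (simp add: add_pos_pos)
  obtain N0 where N0: "\<And>N. N \<ge> N0 \<Longrightarrow> norm (Q (\<lambda>\<theta>. u N \<theta> - v \<theta>) - 0) < e / (2 * K)"
    using LIMSEQ_D[OF d, of "e / (2 * K)"] e0 K0 by auto
  show "\<exists>no. \<forall>N\<ge>no. norm (Q (u N) - Q v) < e"
  proof (intro exI allI impI)
    fix N assume "N \<ge> N0"
    have c: "\<bar>Q (u N) - Q v\<bar> \<le> \<epsilon> * Q v + K * Q (\<lambda>\<theta>. u N \<theta> - v \<theta>)"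
      unfolding K_def by (rule Q_close[OF u v eps0])
    have "Q (\<lambda>\<theta>. u N \<theta> - v \<theta>) < e / (2 * K)" using N0[OF \<open>N \<ge> N0\<close>] by simp
    then have "K * Q (\<lambda>\<theta>. u N \<theta> - v \<theta>) < K * (e / (2 * K))" using K0 by (intro mult_strict_left_mono)
    also have "\<dots> = e / 2" using K0 by simp
    finally show "norm (Q (u N) - Q v) < e" using c epsQ by simp
  qed
qed

lemma L2T_norm_sq:
  assumes "h \<in> L2T"
  shows "Q h = 2*pi * (L2T_norm h)\<^sup>2"
proof -
  have "(L2T_norm h)\<^sup>2 = Q h / (2*pi)" unfolding L2T_HK(2)[OF assms] using Q_nonneg[OF assms] by simp
  then show ?thesis by simp
qed

lemma parseval_shift:
  assumes bf: "boundary_fun \<alpha> g"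
  shows "(\<lambda>n. (cmod (\<alpha> n))\<^sup>2 * wt t n) sums (Q (\<lambda>\<theta>. g (\<theta> - t) - g \<theta>) / (2*pi))"
proof -
  have gL: "g \<in> L2T" using bf unfolding boundary_fun_def by blast
  define hN where "hN N = (\<lambda>\<theta>. g \<theta> - Sf \<alpha> N \<theta>)" for N
  have hL: "hN N \<in> L2T" for N unfolding hN_def by (rule L2T_diff[OF gL Sf_L2T])
  have lim0: "(\<lambda>N. L2T_norm (hN N)) \<longlonglongrightarrow> 0"
    using bf unfolding boundary_fun_def hN_def Sf_def by blast
  have Qh: "(\<lambda>N. Q (hN N)) \<longlonglongrightarrow> 0"
  proof -
    have "(\<lambda>N. 2*pi * (L2T_norm (hN N))\<^sup>2) \<longlonglongrightarrow> 2*pi * 0\<^sup>2" by (intro tendsto_intros lim0)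
    then show ?thesis using L2T_norm_sq[OF hL] by simp
  qed
  define v where "v = (\<lambda>\<theta>. g (\<theta> - t) - g \<theta>)"
  have vL: "v \<in> L2T" unfolding v_def by (rule L2T_diff[OF L2T_shift(1)[OF gL] gL])
  define uN where "uN N = (\<lambda>\<theta>. Sf \<alpha> N (\<theta> - t) - Sf \<alpha> N \<theta>)" for N
  have uL: "uN N \<in> L2T" for N unfolding uN_def by (rule L2T_diff[OF L2T_shift(1)[OF Sf_L2T] Sf_L2T])
  have dle: "Q (\<lambda>\<theta>. uN N \<theta> - v \<theta>) \<le> 4 * Q (hN N)" for N
  proof -
    have eq: "(\<lambda>\<theta>. uN N \<theta> - v \<theta>) = (\<lambda>\<theta>. hN N \<theta> - hN N (\<theta> - t))"
      unfolding uN_def v_def hN_def by (auto simp: fun_eq_iff algebra_simps)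
    have "Q (\<lambda>\<theta>. hN N \<theta> - hN N (\<theta> - t)) \<le> 2 * Q (hN N) + 2 * Q (\<lambda>\<theta>. hN N (\<theta> - t))"
      by (rule Q_diff_le[OF hL L2T_shift(1)[OF hL]])
    also have "Q (\<lambda>\<theta>. hN N (\<theta> - t)) = Q (hN N)" by (rule L2T_shift(2)[OF hL])
    finally show ?thesis unfolding eq by simp
  qed
  have d0: "(\<lambda>N. Q (\<lambda>\<theta>. uN N \<theta> - v \<theta>)) \<longlonglongrightarrow> 0"
  proof (rule tendsto_sandwich[where f="\<lambda>_. 0" and h="\<lambda>N. 4 * Q (hN N)"])
    show "\<forall>\<^sub>F N in sequentially. 0 \<le> Q (\<lambda>\<theta>. uN N \<theta> - v \<theta>)"
      using Q_nonneg[OF L2T_diff[OF uL vL]] by simp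
    show "\<forall>\<^sub>F N in sequentially. Q (\<lambda>\<theta>. uN N \<theta> - v \<theta>) \<le> 4 * Q (hN N)" using dle by simp
    show "(\<lambda>N. 0::real) \<longlonglongrightarrow> 0" by simp
    show "(\<lambda>N. 4 * Q (hN N)) \<longlonglongrightarrow> 0" using tendsto_mult_right_zero[OF Qh, of 4] by simp
  qed
  have "(\<lambda>N. Q (uN N)) \<longlonglongrightarrow> Q v" by (rule Q_conv[OF uL vL d0])
  then have "(\<lambda>N. Q (uN N) / (2*pi)) \<longlonglongrightarrow> Q v / (2*pi)" by (intro tendsto_intros) auto
  moreover have "Q (uN N) / (2*pi) = (\<Sum>n<N. (cmod (\<alpha> n))\<^sup>2 * wt t n)" for N
    unfolding uN_def Q_Sf_shift by simp
  ultimately show ?thesis unfolding sums_def v_def by simp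
qed

lemma L2T_norm_shift_boundary:
  assumes bf: "boundary_fun \<alpha> g"
  shows "L2T_norm (\<lambda>\<theta>. g (\<theta> - t) - g \<theta>) = sqrt (\<Sum>n. (cmod (\<alpha> n))\<^sup>2 * wt t n)"
proof -
  have gL: "g \<in> L2T" using bf unfolding boundary_fun_def by blast
  have vL: "(\<lambda>\<theta>. g (\<theta> - t) - g \<theta>) \<in> L2T" by (rule L2T_diff[OF L2T_shift(1)[OF gL] gL])
  show ?thesis unfolding L2T_HK(2)[OF vL] using sums_unique[OF parseval_shift[OF bf, of t]] by simp
qed

lemma wt_eq: "wt t n = 2 - 2 * cos (real n * t)"
proof -
  define z where "z = exp (- (\<i> * of_nat n * of_real t)) - 1"
  have "Re z = cos (real n * t) - 1" unfolding z_def by (simp add: Re_exp)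
  moreover have "Im z = - sin (real n * t)" unfolding z_def by (simp add: Im_exp)
  ultimately have "(cmod z)\<^sup>2 = (cos (real n * t) - 1)\<^sup>2 + (sin (real n * t))\<^sup>2"
    by (simp add: cmod_power2)
  also have "\<dots> = 2 - 2 * cos (real n * t)"
    using sin_cos_squared_add[of "real n * t"] by (simp add: power2_eq_square algebra_simps)
  finally show ?thesis unfolding wt_def z_def .
qed

lemma wt_nonneg: "wt t n \<ge> 0" unfolding wt_def by simp

lemma wt_le4: "wt t n \<le> 4"
  unfolding wt_eq using cos_ge_minus_one[of "real n * t"] by linarith

lemma wt_le_sq: "wt t n \<le> (real n * t)\<^sup>2"
proof -
  define x where "x = real n * t"
  have "cos x = cos (2 * (x/2))" by simp
  also have "\<dots> = 1 - 2 * (sin (x/2))\<^sup>2" by (rule cos_double_sin)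
  finally have c: "2 - 2 * cos x = 4 * (sin (x/2))\<^sup>2" by simp
  have "\<bar>sin (x/2)\<bar> \<le> \<bar>x/2\<bar>" by (rule abs_sin_x_le_abs_x)
  then have "(sin (x/2))\<^sup>2 \<le> (x/2)\<^sup>2" by (metis power2_abs abs_ge_zero power_mono)
  then have "2 - 2 * cos x \<le> x\<^sup>2" using c by (simp add: power_divide)
  then show ?thesis unfolding wt_eq x_def .
qed

lemma wt_ge:
  assumes "1 \<le> real n * t" "real n * t \<le> 2"
  shows "wt t n \<ge> 2 - 2 * cos 1"
proof -
  have "cos (real n * t) \<le> cos 1"
    by (rule cos_monotone_0_pi_le) (use assms pi_ge_two in auto)
  then show ?thesis unfolding wt_eq by simp
qed

lemma cos1_lt: "cos (1::real) < 1"
  using cos_double_less_one[of "1/2"] by simp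

lemma G_imp_D:
  assumes bf: "boundary_fun \<alpha> g" and sml: "g \<in> small_mean_lip"
  shows "(\<lambda>n. 2 ^ n * blk \<alpha> n) \<longlonglongrightarrow> (0::real)"
proof -
  define a where "a n = (cmod (\<alpha> n))\<^sup>2" for n
  define T where "T t = (\<Sum>n. a n * wt t n)" for t
  have sT: "(\<lambda>n. a n * wt t n) sums T t" for t
  proof -
    have "summable (\<lambda>n. a n * wt t n)"
      using parseval_shift[OF bf, of t] unfolding a_def by (rule sums_summable)
    then show ?thesis unfolding T_def by (rule summable_sums)
  qed
  have T0: "T t \<ge> 0" for t
    unfolding T_def using sT[of t] by (intro suminf_nonneg) (auto simp: a_def wt_nonneg sums_summable)
  define L where "L t = L2T_norm (\<lambda>\<theta>. g (\<theta> - t) - g \<theta>) / sqrt \<bar>t\<bar>" for t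
  have Lt: "L t = sqrt (T t) / sqrt \<bar>t\<bar>" for t
    unfolding L_def L2T_norm_shift_boundary[OF bf] T_def a_def ..
  have Llim: "(L \<longlongrightarrow> 0) (at 0)" using sml unfolding small_mean_lip_def L_def by blast
  define tm where "tm m = (1/2::real)^m" for m
  have tm0: "tm m > 0" for m unfolding tm_def by simp
  have fl: "filterlim tm (at 0) sequentially"
  proof (subst filterlim_at, rule conjI)
    show "(tm \<longlongrightarrow> 0) sequentially" unfolding tm_def by (rule LIMSEQ_realpow_zero) auto
    show "\<forall>\<^sub>F m in sequentially. tm m \<in> UNIV \<and> tm m \<noteq> 0" using tm0 by (simp add: less_imp_neq[symmetric])
  qed
  have "(\<lambda>m. L (tm m)) \<longlonglongrightarrow> 0" by (rule filterlim_compose[OF Llim fl])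
  then have Lsq: "(\<lambda>m. (L (tm m))\<^sup>2) \<longlonglongrightarrow> 0" using tendsto_power[of _ 0 _ 2] by fastforce
  have Leq: "(L (tm m))\<^sup>2 = 2^m * T (tm m)" for m
  proof -
    have "(L (tm m))\<^sup>2 = T (tm m) / tm m" unfolding Lt using T0 tm0[of m]
      by (simp add: power_divide)
    also have "\<dots> = 2^m * T (tm m)" unfolding tm_def by (simp add: power_one_over field_simps)
    finally show ?thesis .
  qed
  define c where "c = 2 - 2 * cos (1::real)"
  have c0: "c > 0" unfolding c_def using cos1_lt by simp
  have bb: "2^m * blk \<alpha> m \<le> (1/c) * (L (tm m))\<^sup>2" for m
  proof -
    have "blk \<alpha> m \<le> (\<Sum>n\<in>{2^m..<2^(m+1)}. a n * wt (tm m) n / c)"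
      unfolding blk_def a_def
    proof (rule sum_mono)
      fix n assume n: "n \<in> {(2::nat)^m..<2^(m+1)}"
      have "1 \<le> real n * tm m"
      proof -
        have "real (2^m) \<le> real n" using n by (intro of_nat_mono) auto
        then have "2^m \<le> real n" by simp
        then show ?thesis unfolding tm_def by (simp add: power_one_over field_simps)
      qed
      moreover have "real n * tm m \<le> 2"
      proof -
        have "real n \<le> real (2^(m+1))" using n by (intro of_nat_mono) auto
        then have "real n \<le> 2 * 2^m" by simp
        then show ?thesis unfolding tm_def by (simp add: power_one_over field_simps)
      qed
      ultimately have "wt (tm m) n \<ge> c" unfolding c_def by (rule wt_ge)
      then have "(cmod (\<alpha> n))\<^sup>2 * c \<le> (cmod (\<alpha> n))\<^sup>2 * wt (tm m) n" by (intro mult_left_mono) auto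
      then show "(cmod (\<alpha> n))\<^sup>2 \<le> (cmod (\<alpha> n))\<^sup>2 * wt (tm m) n / c" using c0 by (simp add: pos_le_divide_eq)
    qed
    also have "\<dots> = (1/c) * (\<Sum>n\<in>{2^m..<2^(m+1)}. a n * wt (tm m) n)" by (simp add: sum_distrib_left)
    also have "(\<Sum>n\<in>{2^m..<2^(m+1)}. a n * wt (tm m) n) \<le> T (tm m)"
      unfolding T_def by (rule sum_le_suminf) (use sT[of "tm m"] in \<open>auto simp: sums_summable a_def wt_nonneg\<close>)
    then have "(1/c) * (\<Sum>n\<in>{2^m..<2^(m+1)}. a n * wt (tm m) n) \<le> (1/c) * T (tm m)"
      using c0 by (intro mult_left_mono) auto
    finally have "blk \<alpha> m \<le> (1/c) * T (tm m)" .
    then have "2^m * blk \<alpha> m \<le> 2^m * ((1/c) * T (tm m))" by (intro mult_left_mono) auto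
    then show ?thesis unfolding Leq by (simp add: algebra_simps)
  qed
  show ?thesis
  proof (rule tendsto_sandwich[where f="\<lambda>_. 0" and h="\<lambda>m. (1/c) * (L (tm m))\<^sup>2"])
    show "\<forall>\<^sub>F n in sequentially. 0 \<le> 2 ^ n * blk \<alpha> n" unfolding blk_def
      by (intro always_eventually allI mult_nonneg_nonneg sum_nonneg) auto
    show "\<forall>\<^sub>F n in sequentially. 2 ^ n * blk \<alpha> n \<le> (1/c) * (L (tm n))\<^sup>2" using bb by simp
    show "(\<lambda>n. 0::real) \<longlonglongrightarrow> 0" by simp
    show "(\<lambda>m. (1/c) * (L (tm m))\<^sup>2) \<longlonglongrightarrow> 0" using tendsto_mult_right_zero[OF Lsq, of "1/c"] by simp
  qed
qed

lemma T_bound: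
  fixes a :: "nat \<Rightarrow> real"
  assumes sa: "summable a" and a0: "\<And>k. a k \<ge> 0"
    and E: "\<And>k. (real k + 1) * tl2 a k \<le> E"
    and eps: "\<And>k. k \<ge> M \<Longrightarrow> (real k + 1) * tl2 a k \<le> \<epsilon>"
    and t0: "0 < \<bar>t\<bar>" and t1: "\<bar>t\<bar> \<le> 1" and tM: "real M \<le> 1 / \<bar>t\<bar>"
  shows "(\<Sum>n. a n * wt t n) \<le> 2 * real M * E * t\<^sup>2 + 6 * \<epsilon> * \<bar>t\<bar>"
proof -
  define \<tau> where "\<tau> = tl2 a"
  have tau0: "\<tau> k \<ge> 0" for k unfolding \<tau>_def by (rule tl2_nonneg[OF sa a0])
  have E0: "E \<ge> 0" using E[of 0] tau0[of 0] unfolding \<tau>_def by simp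
  have e0: "\<epsilon> \<ge> 0"
  proof -
    have "0 \<le> (real M + 1) * tl2 a M" using tau0[of M] unfolding \<tau>_def by simp
    then show ?thesis using eps[of M] by linarith
  qed
  define N where "N = nat \<lfloor>1 / \<bar>t\<bar>\<rfloor>"
  have it1: "1 / \<bar>t\<bar> \<ge> 1" using t0 t1 by (simp add: field_simps)
  have N1: "real N \<le> 1 / \<bar>t\<bar>" unfolding N_def using it1 by linarith
  have N2: "1 / \<bar>t\<bar> < real N + 1" unfolding N_def using it1 by linarith
  have NM: "M \<le> N" unfolding N_def using tM it1 by linarith
  have Nt: "real N * t\<^sup>2 \<le> \<bar>t\<bar>"
  proof -
    have "real N * \<bar>t\<bar> \<le> 1" using N1 t0 by (simp add: field_simps)
    then have "real N * \<bar>t\<bar> * \<bar>t\<bar> \<le> 1 * \<bar>t\<bar>" using t0 by (intro mult_right_mono) auto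
    then have A: "real N * \<bar>t\<bar> * \<bar>t\<bar> \<le> \<bar>t\<bar>" by simp
    have tt: "t\<^sup>2 = \<bar>t\<bar> * \<bar>t\<bar>" by (simp add: power2_eq_square)
    have B: "real N * t\<^sup>2 = real N * \<bar>t\<bar> * \<bar>t\<bar>" by (simp only: tt mult.assoc)
    show ?thesis using A B by linarith
  qed
  have N3: "1 / (real N + 1) < \<bar>t\<bar>"
  proof -
    have "1 < (real N + 1) * \<bar>t\<bar>" using N2 t0 by (simp add: field_simps)
    then show ?thesis by (simp add: field_simps)
  qed
  have s4: "summable (\<lambda>n. 4 * a n)" using sa by (rule summable_mult)
  have nb: "norm (a n * wt t n) \<le> 4 * a n" for n
  proof -
    have "a n * wt t n \<le> a n * 4" by (rule mult_left_mono[OF wt_le4 a0])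
    moreover have "0 \<le> a n * wt t n" using a0[of n] wt_nonneg[of t n] by simp
    ultimately show ?thesis by simp
  qed
  have sw: "summable (\<lambda>n. a n * wt t n)"
    by (rule summable_comparison_test'[OF s4 nb])
  have split: "(\<Sum>n. a n * wt t n) = (\<Sum>i. a (i + N) * wt t (i + N)) + (\<Sum>n<N. a n * wt t n)"
    by (rule suminf_split_initial_segment[OF sw])
  have san: "summable (\<lambda>i. a (i + N))" using summable_ignore_initial_segment[OF sa] by simp
  have tail: "(\<Sum>i. a (i + N) * wt t (i + N)) \<le> 4 * \<epsilon> * \<bar>t\<bar>"
  proof -
    have "(\<Sum>i. a (i + N) * wt t (i + N)) \<le> (\<Sum>i. 4 * a (i + N))"
    proof (rule suminf_le)
      show "a (i + N) * wt t (i + N) \<le> 4 * a (i + N)" for i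
        using mult_left_mono[OF wt_le4[of t "i+N"] a0[of "i+N"]] by (simp add: mult.commute)
      show "summable (\<lambda>i. a (i + N) * wt t (i + N))" using summable_ignore_initial_segment[OF sw] by simp
      show "summable (\<lambda>i. 4 * a (i + N))" using san by (rule summable_mult)
    qed
    also have "\<dots> = 4 * \<tau> N" unfolding \<tau>_def tl2_def using suminf_mult[OF san, of 4] by simp
    also have "\<dots> \<le> 4 * (\<epsilon> / (real N + 1))"
    proof -
      have "(real N + 1) * \<tau> N \<le> \<epsilon>" using eps[OF NM] unfolding \<tau>_def .
      then have "\<tau> N \<le> \<epsilon> / (real N + 1)" by (simp add: field_simps)
      then show ?thesis by simp
    qed
    also have "\<epsilon> / (real N + 1) \<le> \<epsilon> * \<bar>t\<bar>"
      using N3 e0 mult_left_mono[of "1 / (real N + 1)" "\<bar>t\<bar>" \<epsilon>] by simp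
    finally show ?thesis by simp
  qed
  have ai: "a k = \<tau> k - \<tau> (Suc k)" for k unfolding \<tau>_def using tl2_step[OF sa, of k] by simp
  have ab: "(\<Sum>k\<in>{0..<N}. a k * (real k)\<^sup>2) + (real N)\<^sup>2 * \<tau> N
      = (real 0)\<^sup>2 * \<tau> 0 + (\<Sum>k\<in>{0..<N}. ((real (Suc k))\<^sup>2 - (real k)\<^sup>2) * \<tau> (Suc k))"
    by (rule abel_identity[where a=a and \<tau>=\<tau> and s="\<lambda>k. (real k)\<^sup>2", OF ai]) simp
  have termb: "((real (Suc k))\<^sup>2 - (real k)\<^sup>2) * \<tau> (Suc k) \<le> (if k < M then 2 * E else 0) + 2 * \<epsilon>" for k
  proof -
    have d: "(real (Suc k))\<^sup>2 - (real k)\<^sup>2 \<le> 2 * (real (Suc k) + 1)" by (simp add: power2_eq_square algebra_simps)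
    have h1: "((real (Suc k))\<^sup>2 - (real k)\<^sup>2) * \<tau> (Suc k) \<le> 2 * (real (Suc k) + 1) * \<tau> (Suc k)"
      using tau0[of "Suc k"] d by (rule mult_right_mono[rotated])
    then have h1': "((real (Suc k))\<^sup>2 - (real k)\<^sup>2) * \<tau> (Suc k) \<le> 2 * ((real (Suc k) + 1) * \<tau> (Suc k))"
      by (simp only: mult.assoc)
    show ?thesis
    proof (cases "k < M")
      case True
      have hE: "(real (Suc k) + 1) * \<tau> (Suc k) \<le> E" using E[of "Suc k"] unfolding \<tau>_def .
      have "(if k < M then 2 * E else 0) = 2 * E" using True by simp
      then show ?thesis using h1' hE e0 by linarith
    next
      case False
      then have "Suc k \<ge> M" by simp
      then have "(real (Suc k) + 1) * \<tau> (Suc k) \<le> \<epsilon>" using eps[of "Suc k"] unfolding \<tau>_def by simp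
      moreover have "(if k < M then 2 * E else 0) = 0" using False by simp
      ultimately show ?thesis using h1' by linarith
    qed
  qed
  have sq: "(\<Sum>n<N. a n * (real n)\<^sup>2) \<le> 2 * real M * E + 2 * \<epsilon> * real N"
  proof -
    have "(\<Sum>n<N. a n * (real n)\<^sup>2) \<le> (\<Sum>k\<in>{0..<N}. ((real (Suc k))\<^sup>2 - (real k)\<^sup>2) * \<tau> (Suc k))"
    proof -
      have "0 \<le> (real N)\<^sup>2 * \<tau> N" using tau0[of N] by simp
      then show ?thesis using ab by (simp add: atLeast0LessThan)
    qed
    also have "\<dots> \<le> (\<Sum>k\<in>{0..<N}. (if k < M then 2 * E else 0) + 2 * \<epsilon>)"
      by (rule sum_mono) (rule termb)
    also have "\<dots> = (\<Sum>k\<in>{0..<N}. (if k < M then 2 * E else 0)) + 2 * \<epsilon> * real N"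
      by (simp add: sum.distrib)
    also have "(\<Sum>k\<in>{0..<N}. (if k < M then 2 * E else 0)) = (\<Sum>k\<in>{0..<M}. (if k < M then 2 * E else 0)) + (\<Sum>k\<in>{M..<N}. (if k < M then 2 * E else 0))"
      by (rule sum.atLeastLessThan_concat[symmetric]) (use NM in auto)
    also have "(\<Sum>k\<in>{M..<N}. (if k < M then 2 * E else 0)) = 0" by (intro sum.neutral) auto
    also have "(\<Sum>k\<in>{0..<M}. (if k < M then 2 * E else 0)) = (\<Sum>k\<in>{0..<M}. 2 * E)" by (intro sum.cong) auto
    finally show ?thesis by simp
  qed
  have head: "(\<Sum>n<N. a n * wt t n) \<le> 2 * real M * E * t\<^sup>2 + 2 * \<epsilon> * \<bar>t\<bar>"
  proof -
    have "(\<Sum>n<N. a n * wt t n) \<le> (\<Sum>n<N. a n * (real n * t)\<^sup>2)"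
      by (rule sum_mono) (rule mult_left_mono[OF wt_le_sq a0])
    also have "\<dots> = t\<^sup>2 * (\<Sum>n<N. a n * (real n)\<^sup>2)"
      by (simp add: sum_distrib_left power_mult_distrib algebra_simps)
    also have "\<dots> \<le> t\<^sup>2 * (2 * real M * E + 2 * \<epsilon> * real N)"
      by (rule mult_left_mono[OF sq]) simp
    also have "\<dots> = 2 * real M * E * t\<^sup>2 + 2 * \<epsilon> * (real N * t\<^sup>2)" by (simp add: algebra_simps)
    also have "\<dots> \<le> 2 * real M * E * t\<^sup>2 + 2 * \<epsilon> * \<bar>t\<bar>"
      using Nt e0 by (simp add: mult_left_mono)
    finally show ?thesis .
  qed
  show ?thesis using split tail head by simp
qed


lemma TC_imp_sml:
  assumes bf: "boundary_fun \<alpha> g" and aE: "\<alpha> \<in> ell2"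
    and TC: "(\<lambda>k. (real k + 1) * tl2 (\<lambda>n. (cmod (\<alpha> n))\<^sup>2) k) \<longlonglongrightarrow> 0"
  shows "g \<in> small_mean_lip"
proof -
  define a where "a n = (cmod (\<alpha> n))\<^sup>2" for n
  have sa: "summable a" using aE unfolding ell2_def a_def by simp
  have a0: "\<And>k. a k \<ge> 0" unfolding a_def by simp
  have TC': "(\<lambda>k. (real k + 1) * tl2 a k) \<longlonglongrightarrow> 0" using TC unfolding a_def[abs_def] .
  define T where "T t = (\<Sum>n. a n * wt t n)" for t
  have sT: "summable (\<lambda>n. a n * wt t n)" for t
    using parseval_shift[OF bf, of t] unfolding a_def by (rule sums_summable)
  have T0: "T t \<ge> 0" for t
    unfolding T_def using sT[of t] by (intro suminf_nonneg) (auto simp: a0 wt_nonneg)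
  have gL: "g \<in> L2T" using bf unfolding boundary_fun_def by blast
  have Lq: "L2T_norm (\<lambda>\<theta>. g (\<theta> - t) - g \<theta>) / sqrt \<bar>t\<bar> = sqrt (T t / \<bar>t\<bar>)" for t
    unfolding L2T_norm_shift_boundary[OF bf] T_def a_def real_sqrt_divide ..
  have "Bseq (\<lambda>k. (real k + 1) * tl2 a k)" using convergent_imp_Bseq convergentI TC' by blast
  then obtain E0 where E0: "\<And>k. norm ((real k + 1) * tl2 a k) \<le> E0" unfolding Bseq_def by blast
  have E: "\<And>k. (real k + 1) * tl2 a k \<le> E0" using abs_le_D1[OF E0[unfolded real_norm_def]] by blast
  have Epos: "E0 \<ge> 0" using E0[of 0] norm_ge_zero[of "(real 0 + 1) * tl2 a 0"] by linarith
  have Sa0: "(\<Sum>n. a n) \<ge> 0" using sa a0 by (intro suminf_nonneg) auto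
  define C0 where "C0 = 6 * E0 + 4 * (\<Sum>n. a n)"
  have Tle4: "T t \<le> 4 * (\<Sum>n. a n)" for t
  proof -
    have "T t \<le> (\<Sum>n. 4 * a n)" unfolding T_def
    proof (rule suminf_le)
      show "a n * wt t n \<le> 4 * a n" for n using mult_left_mono[OF wt_le4 a0[of n]] by (simp add: mult.commute)
      show "summable (\<lambda>n. a n * wt t n)" by (rule sT)
      show "summable (\<lambda>n. 4 * a n)" using sa by (rule summable_mult)
    qed
    also have "\<dots> = 4 * (\<Sum>n. a n)" using suminf_mult[OF sa, of 4] by simp
    finally show ?thesis .
  qed
  have Rb: "T t / \<bar>t\<bar> \<le> C0" if "t \<noteq> 0" for t
  proof (cases "\<bar>t\<bar> \<le> 1")
    case True
    have "T t \<le> 2 * real 0 * E0 * t\<^sup>2 + 6 * E0 * \<bar>t\<bar>" unfolding T_def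
      by (rule T_bound[OF sa a0 E E]) (use that True in auto)
    then have "T t \<le> 6 * E0 * \<bar>t\<bar>" by simp
    then have "T t / \<bar>t\<bar> \<le> 6 * E0" using that by (simp add: divide_le_eq)
    then show ?thesis unfolding C0_def using Sa0 by simp
  next
    case False
    have "T t * 1 \<le> T t * \<bar>t\<bar>" using False T0[of t] by (intro mult_left_mono) auto
    then have "T t / \<bar>t\<bar> \<le> T t" using False by (simp add: divide_le_eq)
    then show ?thesis unfolding C0_def using Tle4[of t] Epos by simp
  qed
  have Rlim: "((\<lambda>t. T t / \<bar>t\<bar>) \<longlongrightarrow> 0) (at 0)"
  proof (rule LIM_I)
    fix e :: real assume e0: "e > 0"
    define \<epsilon> where "\<epsilon> = e / 12"
    have eps0: "\<epsilon> > 0" unfolding \<epsilon>_def using e0 by simp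
    obtain M where M: "\<And>k. k \<ge> M \<Longrightarrow> norm ((real k + 1) * tl2 a k - 0) < \<epsilon>"
      using LIMSEQ_D[OF TC' eps0] by blast
    have Meps: "(real k + 1) * tl2 a k \<le> \<epsilon>" if "k \<ge> M" for k
    proof -
      have "norm ((real k + 1) * tl2 a k - 0) < \<epsilon>" by (rule M[OF that])
      then have "\<bar>(real k + 1) * tl2 a k\<bar> < \<epsilon>" by simp
      then show ?thesis using abs_ge_self[of "(real k + 1) * tl2 a k"] by linarith
    qed
    define s where "s = min (1 / (real M + 1)) (e / (4 * real M * E0 + 1))"
    have ME: "real M * E0 \<ge> 0" using Epos by simp
    have s0: "s > 0" unfolding s_def using e0 ME by (simp add: add_nonneg_pos)
    show "\<exists>s>0. \<forall>x. x \<noteq> 0 \<and> norm (x - 0) < s \<longrightarrow> norm (T x / \<bar>x\<bar> - 0) < e"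
    proof (intro exI conjI allI impI)
      show "s > 0" by (rule s0)
      fix t :: real assume "t \<noteq> 0 \<and> norm (t - 0) < s"
      then have tn: "t \<noteq> 0" and ts: "\<bar>t\<bar> < s" by auto
      have t0: "0 < \<bar>t\<bar>" using tn by simp
      have ts1: "\<bar>t\<bar> < 1 / (real M + 1)" using ts unfolding s_def by simp
      have ts2: "\<bar>t\<bar> < e / (4 * real M * E0 + 1)" using ts unfolding s_def by simp
      have t1: "\<bar>t\<bar> \<le> 1"
      proof -
        have h: "1 / (real M + 1) \<le> 1" by simp
        show ?thesis using ts1 h by linarith
      qed
      have tM: "real M \<le> 1 / \<bar>t\<bar>"
      proof -
        have "\<bar>t\<bar> * (real M + 1) < 1" using ts1 by (simp add: field_simps)
        then have "real M + 1 < 1 / \<bar>t\<bar>" using t0 by (simp add: field_simps)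
        then show ?thesis by simp
      qed
      have TB: "T t \<le> 2 * real M * E0 * t\<^sup>2 + 6 * \<epsilon> * \<bar>t\<bar>" unfolding T_def
        by (rule T_bound[OF sa a0 E Meps t0 t1 tM])
      have "T t / \<bar>t\<bar> \<le> 2 * real M * E0 * \<bar>t\<bar> + 6 * \<epsilon>"
      proof -
        have "t\<^sup>2 = \<bar>t\<bar> * \<bar>t\<bar>" by (simp add: power2_eq_square)
        then have "2 * real M * E0 * t\<^sup>2 + 6 * \<epsilon> * \<bar>t\<bar> = (2 * real M * E0 * \<bar>t\<bar> + 6 * \<epsilon>) * \<bar>t\<bar>"
          by (simp add: algebra_simps)
        then show ?thesis using TB t0 by (simp add: divide_le_eq)
      qed
      also have "2 * real M * E0 * \<bar>t\<bar> < e / 2"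
      proof -
        have "4 * real M * E0 * \<bar>t\<bar> \<le> 4 * real M * E0 * (e / (4 * real M * E0 + 1))"
          using ts2 ME Epos by (intro mult_left_mono) auto
        also have "\<dots> < e"
        proof -
          have "4 * real M * E0 * e < e * (4 * real M * E0 + 1)" using e0 by (simp add: algebra_simps)
          then show ?thesis using ME by (simp add: field_simps add_nonneg_pos)
        qed
        finally show ?thesis by simp
      qed
      then have "2 * real M * E0 * \<bar>t\<bar> + 6 * \<epsilon> < e" unfolding \<epsilon>_def by simp
      finally have "T t / \<bar>t\<bar> < e" .
      moreover have "T t / \<bar>t\<bar> \<ge> 0" using T0[of t] by simp
      ultimately show "norm (T t / \<bar>t\<bar> - 0) < e" by (simp only: diff_zero real_norm_def abs_of_nonneg)
    qed
  qed
  have "((\<lambda>t. sqrt (T t / \<bar>t\<bar>)) \<longlongrightarrow> sqrt 0) (at 0)" by (rule tendsto_real_sqrt[OF Rlim])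
  then have lim: "((\<lambda>t. L2T_norm (\<lambda>\<theta>. g (\<theta> - t) - g \<theta>) / sqrt \<bar>t\<bar>) \<longlongrightarrow> 0) (at 0)"
    unfolding Lq by simp
  have bnd: "\<forall>t. t \<noteq> 0 \<longrightarrow> L2T_norm (\<lambda>\<theta>. g (\<theta> - t) - g \<theta>) / sqrt \<bar>t\<bar> \<le> sqrt C0"
    unfolding Lq using Rb by (simp add: real_sqrt_le_mono)
  show ?thesis unfolding small_mean_lip_def using gL lim bnd by blast
qed

lemma Sf_diff:
  assumes "N \<le> M"
  shows "Sf \<alpha> M \<theta> - Sf \<alpha> N \<theta> = (\<Sum>n<M. (if N \<le> n then \<alpha> n else 0) * exp (\<i> * of_nat n * of_real \<theta>))"
proof -
  have "Sf \<alpha> M \<theta> = (\<Sum>n\<in>{0..<N}. \<alpha> n * exp (\<i> * of_nat n * of_real \<theta>)) + (\<Sum>n\<in>{N..<M}. \<alpha> n * exp (\<i> * of_nat n * of_real \<theta>))"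
    unfolding Sf_def atLeast0LessThan[symmetric] by (rule sum.atLeastLessThan_concat[symmetric]) (use assms in auto)
  moreover have "Sf \<alpha> N \<theta> = (\<Sum>n\<in>{0..<N}. \<alpha> n * exp (\<i> * of_nat n * of_real \<theta>))"
    unfolding Sf_def atLeast0LessThan ..
  moreover have "(\<Sum>n<M. (if N \<le> n then \<alpha> n else 0) * exp (\<i> * of_nat n * of_real \<theta>))
      = (\<Sum>n\<in>{N..<M}. \<alpha> n * exp (\<i> * of_nat n * of_real \<theta>))"
  proof -
    have "(\<Sum>n<M. (if N \<le> n then \<alpha> n else 0) * exp (\<i> * of_nat n * of_real \<theta>))
        = (\<Sum>n\<in>{..<M}. if n \<in> {N..} then \<alpha> n * exp (\<i> * of_nat n * of_real \<theta>) else 0)"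
      by (intro sum.cong) auto
    also have "\<dots> = (\<Sum>n\<in>{..<M} \<inter> {N..}. \<alpha> n * exp (\<i> * of_nat n * of_real \<theta>))"
      by (rule sum.inter_restrict[symmetric]) simp
    also have "{..<M} \<inter> {N..} = {N..<M}" by auto
    finally show ?thesis .
  qed
  ultimately show ?thesis by simp
qed

lemma Q_Sf_diff:
  assumes "N \<le> M"
  shows "Q (\<lambda>\<theta>. Sf \<alpha> M \<theta> - Sf \<alpha> N \<theta>) = 2*pi * (\<Sum>n\<in>{N..<M}. (cmod (\<alpha> n))\<^sup>2)"
proof -
  have "Q (\<lambda>\<theta>. Sf \<alpha> M \<theta> - Sf \<alpha> N \<theta>) = 2*pi * (\<Sum>n<M. (cmod (if N \<le> n then \<alpha> n else 0))\<^sup>2)"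
    unfolding Sf_diff[OF assms] by (rule trig_Q)
  also have "(\<Sum>n<M. (cmod (if N \<le> n then \<alpha> n else 0))\<^sup>2) = (\<Sum>n\<in>{..<M}. if n \<in> {N..} then (cmod (\<alpha> n))\<^sup>2 else 0)"
    by (intro sum.cong) auto
  also have "\<dots> = (\<Sum>n\<in>{..<M} \<inter> {N..}. (cmod (\<alpha> n))\<^sup>2)" by (rule sum.inter_restrict[symmetric]) simp
  also have "{..<M} \<inter> {N..} = {N..<M}" by auto
  finally show ?thesis .
qed

lemma block_le_tl2:
  fixes a :: "nat \<Rightarrow> real"
  assumes sa: "summable a" and a0: "\<And>k. a k \<ge> 0"
  shows "(\<Sum>n\<in>{N..<M}. a n) \<le> tl2 a N"
proof (cases "N \<le> M")
  case True
  have "(\<Sum>n\<in>{0 + N..<(M - N) + N}. a n) = (\<Sum>i\<in>{0..<M - N}. a (i + N))" by (rule sum.shift_bounds_nat_ivl)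
  then have "(\<Sum>n\<in>{N..<M}. a n) = (\<Sum>i\<in>{0..<M - N}. a (i + N))" using True by simp
  also have "\<dots> \<le> tl2 a N" unfolding tl2_def
    by (rule sum_le_suminf) (use summable_ignore_initial_segment[OF sa, of N] a0 in auto)
  finally show ?thesis .
next
  case False
  then show ?thesis using tl2_nonneg[OF sa a0] by simp
qed

lemma tl2_lim:
  fixes a :: "nat \<Rightarrow> real"
  assumes sa: "summable a"
  shows "tl2 a \<longlonglongrightarrow> 0"
proof -
  have eq: "tl2 a k = suminf a - (\<Sum>i<k. a i)" for k
    unfolding tl2_def using suminf_split_initial_segment[OF sa, of k] by simp
  have "(\<lambda>k. suminf a - (\<Sum>i<k. a i)) \<longlonglongrightarrow> suminf a - suminf a"
    by (intro tendsto_intros summable_LIMSEQ[OF sa])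
  then show ?thesis unfolding eq[abs_def] by simp
qed

lemma H1:
  assumes "u \<in> L2T"
  shows "integral\<^sup>N lborel (\<lambda>\<theta>. ennreal ((cmod (u \<theta>))\<^sup>2) * indicator {0..2*pi} \<theta>) = ennreal (Q u)"
proof -
  have hi: "((\<lambda>\<theta>. (cmod (u \<theta>))\<^sup>2) has_integral Q u) {0..2*pi}"
    unfolding Q_def by (rule integrable_integral[OF L2T_HK(1)[OF assms]])
  show ?thesis by (rule nn_integral_has_integral_lebesgue'[OF _ hi]) simp
qed

lemma H2:
  assumes meas: "v \<in> borel_measurable lborel" and B0: "B \<ge> 0"
    and le: "integral\<^sup>N lborel (\<lambda>\<theta>. ennreal ((cmod (v \<theta>))\<^sup>2) * indicator {0..2*pi} \<theta>) \<le> ennreal B"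
  shows "(\<lambda>\<theta>. (cmod (v \<theta>))\<^sup>2) integrable_on {0..2*pi}"
    "integral {0..2*pi} (\<lambda>\<theta>. (cmod (v \<theta>))\<^sup>2) \<le> B"
proof -
  define q where "q \<theta> = indicator {0..2*pi} \<theta> * (cmod (v \<theta>))\<^sup>2" for \<theta> :: real
  have qe: "ennreal (q \<theta>) = ennreal ((cmod (v \<theta>))\<^sup>2) * indicator {0..2*pi} \<theta>" for \<theta>
    unfolding q_def by (simp add: ennreal_mult' ennreal_indicator mult.commute)
  define I where "I = integral\<^sup>N lborel (\<lambda>\<theta>. ennreal (q \<theta>))"
  have IB: "I \<le> ennreal B" unfolding I_def qe using le .
  then have It: "I < top" by (simp add: le_less_trans)
  define r where "r = enn2real I"
  have Ir: "I = ennreal r" unfolding r_def using It by simp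
  have r0: "r \<ge> 0" unfolding r_def by simp
  have qm: "q \<in> borel_measurable borel"
  proof -
    have "q \<in> borel_measurable lborel" unfolding q_def using meas by measurable
    then show ?thesis by simp
  qed
  have qI: "integral\<^sup>N lborel (\<lambda>\<theta>. ennreal (q \<theta>)) = ennreal r" using Ir unfolding I_def .
  have q0: "0 \<le> q \<theta>" for \<theta> unfolding q_def by simp
  have "(q has_integral r) UNIV"
    by (rule nn_integral_has_integral[OF qm q0 qI r0])
  moreover have "q = (\<lambda>\<theta>. if \<theta> \<in> {0..2*pi} then (cmod (v \<theta>))\<^sup>2 else 0)"
    unfolding q_def by (auto simp: fun_eq_iff indicator_def)
  ultimately have hi: "((\<lambda>\<theta>. (cmod (v \<theta>))\<^sup>2) has_integral r) {0..2*pi}"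
    using has_integral_restrict_UNIV by metis
  then show "(\<lambda>\<theta>. (cmod (v \<theta>))\<^sup>2) integrable_on {0..2*pi}" by (rule has_integral_integrable)
  have "r \<le> B" using IB unfolding Ir using B0 by simp
  then show "integral {0..2*pi} (\<lambda>\<theta>. (cmod (v \<theta>))\<^sup>2) \<le> B" using integral_unique[OF hi] by simp
qed

lemma H3:
  fixes h :: "nat \<Rightarrow> complex"
  assumes s: "summable (\<lambda>k. 2^k * (cmod (h k))\<^sup>2)"
  shows "summable h"
proof -
  define R where "R = (\<Sum>k. 2^k * (cmod (h k))\<^sup>2)"
  have R: "2^k * (cmod (h k))\<^sup>2 \<le> R" for k
    unfolding R_def using sum_le_suminf[OF s, of "{k}"] by simp
  have R0: "R \<ge> 0" using R[of 0] by (metis mult_nonneg_nonneg order_trans zero_le_power zero_le_numeral zero_le_power2)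
  define c where "c = sqrt (1/2::real)"
  have c0: "c \<ge> 0" and c1: "c < 1" unfolding c_def by (auto simp: real_sqrt_less_iff)
  have bnd: "norm (h k) \<le> sqrt R * c^k" for k
  proof -
    have "(cmod (h k))\<^sup>2 \<le> R / 2^k" using R[of k] by (simp add: field_simps)
    also have "\<dots> = R * (1/2)^k" by (simp add: power_one_over field_simps)
    finally have "sqrt ((cmod (h k))\<^sup>2) \<le> sqrt (R * (1/2)^k)" by (rule real_sqrt_le_mono)
    also have "sqrt (R * (1/2)^k) = sqrt R * c^k" unfolding c_def by (simp add: real_sqrt_mult real_sqrt_power)
    finally show ?thesis by simp
  qed
  have "summable (\<lambda>k. sqrt R * c^k)"
    by (rule summable_mult) (rule summable_geometric, use c0 c1 in simp)
  then show ?thesis by (rule summable_comparison_test'[OF _ bnd])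
qed

lemma RF_subseq:
  fixes a :: "nat \<Rightarrow> real"
  assumes sa: "summable a"
  shows "\<exists>N. strict_mono N \<and> (\<forall>k. tl2 a (N k) \<le> (1/8)^k)"
proof -
  have "\<forall>k. \<exists>n. \<forall>m\<ge>n. tl2 a m \<le> (1/8)^k"
  proof
    fix k :: nat
    have r0: "(1/8::real)^k > 0" by simp
    from LIMSEQ_D[OF tl2_lim[OF sa] r0] obtain n where n: "\<And>m. m \<ge> n \<Longrightarrow> norm (tl2 a m - 0) < (1/8)^k"
      by blast
    show "\<exists>n. \<forall>m\<ge>n. tl2 a m \<le> (1/8)^k"
    proof (intro exI allI impI)
      fix m assume "m \<ge> n"
      then have "\<bar>tl2 a m\<bar> < (1/8)^k" using n by simp
      then show "tl2 a m \<le> (1/8)^k" using abs_ge_self[of "tl2 a m"] by linarith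
    qed
  qed
  from choice[OF this] obtain nb where nb: "\<forall>k. \<forall>m\<ge>nb k. tl2 a m \<le> (1/8)^k" by blast
  define N where "N k = (\<Sum>i\<le>k. nb i) + k" for k
  have Nge: "nb k \<le> N k" for k
  proof -
    have "nb k \<le> (\<Sum>i\<le>k. nb i)" by (rule member_le_sum) auto
    then show ?thesis unfolding N_def by simp
  qed
  have "strict_mono N" unfolding strict_mono_Suc_iff N_def by simp
  moreover have "\<forall>k. tl2 a (N k) \<le> (1/8)^k" using nb Nge by blast
  ultimately show ?thesis by blast
qed

lemma Sf_meas: "Sf \<alpha> M \<in> borel_measurable lborel"
  using Sf_L2T unfolding L2T_def by blast

lemma RF:
  assumes aE: "\<alpha> \<in> ell2"
  shows "\<exists>g. boundary_fun \<alpha> g"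
proof -
  define a where "a n = (cmod (\<alpha> n))\<^sup>2" for n
  have sa: "summable a" using aE unfolding ell2_def a_def by simp
  have a0: "\<And>k. a k \<ge> 0" unfolding a_def by simp
  obtain N where Nm: "strict_mono N" and Nt: "\<And>k. tl2 a (N k) \<le> (1/8)^k"
    using RF_subseq[OF sa] by blast
  define F where "F k = Sf \<alpha> (N k)" for k
  define h where "h k = (\<lambda>\<theta>. F (Suc k) \<theta> - F k \<theta>)" for k
  have FL: "F k \<in> L2T" for k unfolding F_def by (rule Sf_L2T)
  have hL: "h k \<in> L2T" for k unfolding h_def by (rule L2T_diff[OF FL FL])
  have Fm[measurable]: "F k \<in> borel_measurable lborel" for k unfolding F_def by (rule Sf_meas)
  have hm[measurable]: "h k \<in> borel_measurable lborel" for k using hL unfolding L2T_def by blast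
  have Qh: "Q (h k) \<le> 2*pi * (1/8)^k" for k
  proof -
    have NN: "N k \<le> N (Suc k)" using strict_mono_less_eq[OF Nm] by simp
    have "Q (h k) = 2*pi * (\<Sum>n\<in>{N k..<N (Suc k)}. a n)"
      unfolding h_def F_def a_def by (rule Q_Sf_diff[OF NN])
    also have "(\<Sum>n\<in>{N k..<N (Suc k)}. a n) \<le> tl2 a (N k)" by (rule block_le_tl2[OF sa a0])
    also have "\<dots> \<le> (1/8)^k" by (rule Nt)
    finally show ?thesis by simp
  qed
  define b where "b k = 2^k * Q (h k)" for k
  have b0: "b k \<ge> 0" for k unfolding b_def using Q_nonneg[OF hL] by simp
  have sb: "summable b"
  proof (rule summable_comparison_test'[where g="\<lambda>k. 2*pi * (1/4)^k"])
    show "summable (\<lambda>k. 2*pi * (1/4::real)^k)" by (rule summable_mult) (rule summable_geometric, simp)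
    fix k :: nat
    have "b k \<le> 2^k * (2*pi * (1/8)^k)" unfolding b_def by (rule mult_left_mono[OF Qh]) simp
    also have "\<dots> = 2*pi * ((2::real)^k * (1/8)^k)" by (simp only: mult_ac)
    also have "(2::real)^k * (1/8)^k = (2 * (1/8))^k" by (simp only: power_mult_distrib)
    also have "(2::real) * (1/8) = 1/4" by simp
    finally show "norm (b k) \<le> 2*pi * (1/4)^k" using b0[of k] by simp
  qed
  define \<phi> where "\<phi> k \<theta> = ennreal (2^k * (cmod (h k \<theta>))\<^sup>2) * indicator {0..2*pi} \<theta>" for k \<theta>
  have \<phi>m[measurable]: "\<phi> k \<in> borel_measurable lborel" for k unfolding \<phi>_def by measurable
  have \<phi>I: "integral\<^sup>N lborel (\<phi> k) = ennreal (b k)" for k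
  proof -
    have hi: "((\<lambda>\<theta>. 2^k * (cmod (h k \<theta>))\<^sup>2) has_integral (2^k * Q (h k))) {0..2*pi}"
      unfolding Q_def by (rule has_integral_mult_right[OF integrable_integral[OF L2T_HK(1)[OF hL]]])
    show ?thesis unfolding \<phi>_def b_def by (rule nn_integral_has_integral_lebesgue'[OF _ hi]) simp
  qed
  define \<Phi> where "\<Phi> \<theta> = (\<Sum>k. \<phi> k \<theta>)" for \<theta>
  have \<Phi>m: "\<Phi> \<in> borel_measurable lborel" unfolding \<Phi>_def by measurable
  have "integral\<^sup>N lborel \<Phi> = (\<Sum>k. integral\<^sup>N lborel (\<phi> k))"
    unfolding \<Phi>_def by (rule nn_integral_suminf[OF \<phi>m])
  also have "\<dots> = (\<Sum>k. ennreal (b k))" by (simp only: \<phi>I)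
  also have "\<dots> = ennreal (\<Sum>k. b k)" by (rule suminf_ennreal2[OF b0 sb])
  finally have \<Phi>I: "integral\<^sup>N lborel \<Phi> \<noteq> \<infinity>" by simp
  have AE1: "AE \<theta> in lborel. \<Phi> \<theta> \<noteq> \<infinity>" by (rule nn_integral_PInf_AE[OF \<Phi>m \<Phi>I])
  have conv: "convergent (\<lambda>k. F k \<theta>)" if th: "\<theta> \<in> {0..2*pi}" and fin: "\<Phi> \<theta> \<noteq> \<infinity>" for \<theta>
  proof -
    have "\<phi> k \<theta> = ennreal (2^k * (cmod (h k \<theta>))\<^sup>2)" for k unfolding \<phi>_def using th by simp
    then have "(\<Sum>k. ennreal (2^k * (cmod (h k \<theta>))\<^sup>2)) \<noteq> top" using fin unfolding \<Phi>_def by simp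
    then have "summable (\<lambda>k. 2^k * (cmod (h k \<theta>))\<^sup>2)" by (rule summable_suminf_not_top[rotated]) simp
    then have "summable (\<lambda>k. h k \<theta>)" by (rule H3)
    then have c1: "convergent (\<lambda>K. \<Sum>k<K. h k \<theta>)" by (simp add: summable_iff_convergent)
    have "convergent (\<lambda>K. F 0 \<theta> + (\<Sum>k<K. h k \<theta>))" by (rule convergent_add[OF convergent_const c1])
    moreover have "F 0 \<theta> + (\<Sum>k<K. h k \<theta>) = F K \<theta>" for K
      unfolding h_def using sum_lessThan_telescope[of "\<lambda>k. F k \<theta>" K] by simp
    ultimately show ?thesis by simp
  qed
  define g where "g \<theta> = lim (\<lambda>k. F k \<theta>)" for \<theta>
  have gm[measurable]: "g \<in> borel_measurable lborel" unfolding g_def by (rule borel_measurable_lim_metric[OF Fm])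
  have gper: "g (\<theta> + 2*pi) = g \<theta>" for \<theta>
  proof -
    have "F k (\<theta> + 2*pi) = F k \<theta>" for k unfolding F_def Sf_def by (simp only: exp_per)
    then show ?thesis unfolding g_def by simp
  qed
  have glim: "AE \<theta> in lborel. \<theta> \<in> {0..2*pi} \<longrightarrow> (\<lambda>k. F k \<theta>) \<longlonglongrightarrow> g \<theta>"
  proof (rule AE_mp[OF AE1], intro AE_I2 impI)
    fix \<theta> assume "\<Phi> \<theta> \<noteq> \<infinity>" "\<theta> \<in> {0..2*pi}"
    then have "convergent (\<lambda>k. F k \<theta>)" using conv by blast
    then show "(\<lambda>k. F k \<theta>) \<longlonglongrightarrow> g \<theta>" unfolding g_def by (simp add: convergent_LIMSEQ_iff)
  qed
  have Fat: "integral\<^sup>N lborel (\<lambda>\<theta>. ennreal ((cmod (g \<theta> - Sf \<alpha> M \<theta>))\<^sup>2) * indicator {0..2*pi} \<theta>)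
      \<le> ennreal (2*pi * tl2 a M)" for M
  proof -
    have Sm[measurable]: "Sf \<alpha> M \<in> borel_measurable lborel" by (rule Sf_meas)
    define u where "u k \<theta> = ennreal ((cmod (F k \<theta> - Sf \<alpha> M \<theta>))\<^sup>2) * indicator {0..2*pi} \<theta>" for k \<theta>
    have um: "u k \<in> borel_measurable lborel" for k unfolding u_def by measurable
    have AEu: "AE \<theta> in lborel. ennreal ((cmod (g \<theta> - Sf \<alpha> M \<theta>))\<^sup>2) * indicator {0..2*pi} \<theta> = liminf (\<lambda>k. u k \<theta>)"
    proof (rule AE_mp[OF glim], intro AE_I2 impI)
      fix \<theta> assume L: "\<theta> \<in> {0..2*pi} \<longrightarrow> (\<lambda>k. F k \<theta>) \<longlonglongrightarrow> g \<theta>"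
      show "ennreal ((cmod (g \<theta> - Sf \<alpha> M \<theta>))\<^sup>2) * indicator {0..2*pi} \<theta> = liminf (\<lambda>k. u k \<theta>)"
      proof (cases "\<theta> \<in> {0..2*pi}")
        case True
        have "(\<lambda>k. ennreal ((cmod (F k \<theta> - Sf \<alpha> M \<theta>))\<^sup>2)) \<longlonglongrightarrow> ennreal ((cmod (g \<theta> - Sf \<alpha> M \<theta>))\<^sup>2)"
          using L True by (intro tendsto_intros) auto
        then have "liminf (\<lambda>k. ennreal ((cmod (F k \<theta> - Sf \<alpha> M \<theta>))\<^sup>2)) = ennreal ((cmod (g \<theta> - Sf \<alpha> M \<theta>))\<^sup>2)"
          by (rule lim_imp_Liminf[rotated]) simp
        then show ?thesis unfolding u_def using True by simp
      next
        case False
        then show ?thesis unfolding u_def by (simp add: Liminf_const)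
      qed
    qed
    have "integral\<^sup>N lborel (\<lambda>\<theta>. ennreal ((cmod (g \<theta> - Sf \<alpha> M \<theta>))\<^sup>2) * indicator {0..2*pi} \<theta>)
        = integral\<^sup>N lborel (\<lambda>\<theta>. liminf (\<lambda>k. u k \<theta>))"
      by (rule nn_integral_cong_AE[OF AEu])
    also have "\<dots> \<le> liminf (\<lambda>k. integral\<^sup>N lborel (u k))" by (rule nn_integral_liminf[OF um])
    also have "\<dots> \<le> ennreal (2*pi * tl2 a M)"
    proof (rule Liminf_le)
      show "sequentially \<noteq> bot" by simp
      show "\<forall>\<^sub>F k in sequentially. integral\<^sup>N lborel (u k) \<le> ennreal (2*pi * tl2 a M)"
      proof (rule eventually_sequentiallyI[of M])
        fix k assume k: "M \<le> k"
        have NkM: "M \<le> N k" using k seq_suble[OF Nm, of k] by simp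
        have dL: "(\<lambda>\<theta>. F k \<theta> - Sf \<alpha> M \<theta>) \<in> L2T" by (rule L2T_diff[OF FL Sf_L2T])
        have "integral\<^sup>N lborel (u k) = ennreal (Q (\<lambda>\<theta>. F k \<theta> - Sf \<alpha> M \<theta>))"
          unfolding u_def by (rule H1[OF dL])
        also have "Q (\<lambda>\<theta>. F k \<theta> - Sf \<alpha> M \<theta>) = 2*pi * (\<Sum>n\<in>{M..<N k}. a n)"
          unfolding F_def a_def by (rule Q_Sf_diff[OF NkM])
        also have "(\<Sum>n\<in>{M..<N k}. a n) \<le> tl2 a M" by (rule block_le_tl2[OF sa a0])
        then have "2*pi * (\<Sum>n\<in>{M..<N k}. a n) \<le> 2*pi * tl2 a M" by simp
        then have "ennreal (2*pi * (\<Sum>n\<in>{M..<N k}. a n)) \<le> ennreal (2*pi * tl2 a M)" by (rule ennreal_leI)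
        finally show "integral\<^sup>N lborel (u k) \<le> ennreal (2*pi * tl2 a M)" .
      qed
    qed
    finally show ?thesis .
  qed
  have t0: "tl2 a M \<ge> 0" for M by (rule tl2_nonneg[OF sa a0])
  have vm: "(\<lambda>\<theta>. g \<theta> - Sf \<alpha> M \<theta>) \<in> borel_measurable lborel" for M
    using gm Sf_meas[of \<alpha> M] by measurable
  have intM: "(\<lambda>\<theta>. (cmod (g \<theta> - Sf \<alpha> M \<theta>))\<^sup>2) integrable_on {0..2*pi}"
      "integral {0..2*pi} (\<lambda>\<theta>. (cmod (g \<theta> - Sf \<alpha> M \<theta>))\<^sup>2) \<le> 2*pi * tl2 a M" for M
    using H2[OF vm _ Fat[of M]] t0[of M] by auto
  have S0: "Sf \<alpha> 0 \<theta> = 0" for \<theta> unfolding Sf_def by simp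
  have gL: "g \<in> L2T"
    by (rule L2T_I[OF gm gper]) (use intM(1)[of 0] S0 in simp)
  have vL: "(\<lambda>\<theta>. g \<theta> - Sf \<alpha> M \<theta>) \<in> L2T" for M by (rule L2T_diff[OF gL Sf_L2T])
  have nb: "L2T_norm (\<lambda>\<theta>. g \<theta> - Sf \<alpha> M \<theta>) \<le> sqrt (tl2 a M)" for M
  proof -
    have "Q (\<lambda>\<theta>. g \<theta> - Sf \<alpha> M \<theta>) \<le> 2*pi * tl2 a M" unfolding Q_def by (rule intM(2))
    then have "Q (\<lambda>\<theta>. g \<theta> - Sf \<alpha> M \<theta>) / (2*pi) \<le> tl2 a M" by (simp add: divide_le_eq mult.commute)
    then show ?thesis unfolding L2T_HK(2)[OF vL] by (rule real_sqrt_le_mono)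
  qed
  have nn: "L2T_norm (\<lambda>\<theta>. g \<theta> - Sf \<alpha> M \<theta>) \<ge> 0" for M
    unfolding L2T_HK(2)[OF vL] using Q_nonneg[OF vL] by simp
  have "(\<lambda>M. L2T_norm (\<lambda>\<theta>. g \<theta> - Sf \<alpha> M \<theta>)) \<longlonglongrightarrow> 0"
  proof (rule tendsto_sandwich[where f="\<lambda>_. 0" and h="\<lambda>M. sqrt (tl2 a M)"])
    show "\<forall>\<^sub>F M in sequentially. 0 \<le> L2T_norm (\<lambda>\<theta>. g \<theta> - Sf \<alpha> M \<theta>)" using nn by simp
    show "\<forall>\<^sub>F M in sequentially. L2T_norm (\<lambda>\<theta>. g \<theta> - Sf \<alpha> M \<theta>) \<le> sqrt (tl2 a M)" using nb by simp
    show "(\<lambda>M. 0::real) \<longlonglongrightarrow> 0" by simp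
    have "(\<lambda>M. sqrt (tl2 a M)) \<longlonglongrightarrow> sqrt 0" by (rule tendsto_real_sqrt[OF tl2_lim[OF sa]])
    then show "(\<lambda>M. sqrt (tl2 a M)) \<longlonglongrightarrow> 0" by simp
  qed
  then have "boundary_fun \<alpha> g" unfolding boundary_fun_def Sf_def using gL by simp
  then show ?thesis by blast
qed

theorem theorem1p2:
  fixes \<alpha> :: "nat \<Rightarrow> complex"
  assumes "\<alpha> \<in> ell2"
  shows "(compact_op_ell2 (rhaly \<alpha>) \<longleftrightarrow> (\<exists>g. boundary_fun \<alpha> g \<and> g \<in> small_mean_lip))
       \<and> ((\<exists>g. boundary_fun \<alpha> g \<and> g \<in> small_mean_lip) \<longleftrightarrow>
          (\<lambda>n. 2 ^ n * (\<Sum>j\<in>{2^n..<2^(n+1)}. (cmod (\<alpha> j))\<^sup>2)) \<longlonglongrightarrow> (0::real))"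
proof -
  have bD: "(\<lambda>n. 2 ^ n * (\<Sum>j\<in>{2^n..<2^(n+1)}. (cmod (\<alpha> j))\<^sup>2)) = (\<lambda>n. 2 ^ n * blk \<alpha> n)"
    by (simp add: blk_def)
  have CD: "compact_op_ell2 (rhaly \<alpha>) \<longleftrightarrow> (\<lambda>n. 2 ^ n * blk \<alpha> n) \<longlonglongrightarrow> (0::real)"
  proof
    assume "compact_op_ell2 (rhaly \<alpha>)"
    then show "(\<lambda>n. 2 ^ n * blk \<alpha> n) \<longlonglongrightarrow> (0::real)" by (rule C_imp_D)
  next
    assume "(\<lambda>n. 2 ^ n * blk \<alpha> n) \<longlonglongrightarrow> (0::real)"
    then show "compact_op_ell2 (rhaly \<alpha>)" by (rule compact_from_tail[OF assms D_imp_TC[OF assms]])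
  qed
  have GD: "(\<exists>g. boundary_fun \<alpha> g \<and> g \<in> small_mean_lip) \<longleftrightarrow> (\<lambda>n. 2 ^ n * blk \<alpha> n) \<longlonglongrightarrow> (0::real)"
  proof
    assume "\<exists>g. boundary_fun \<alpha> g \<and> g \<in> small_mean_lip"
    then obtain g where "boundary_fun \<alpha> g" "g \<in> small_mean_lip" by blast
    then show "(\<lambda>n. 2 ^ n * blk \<alpha> n) \<longlonglongrightarrow> (0::real)" by (rule G_imp_D)
  next
    assume D: "(\<lambda>n. 2 ^ n * blk \<alpha> n) \<longlonglongrightarrow> (0::real)"
    obtain g where bf: "boundary_fun \<alpha> g" using RF[OF assms] by blast
    have "g \<in> small_mean_lip" by (rule TC_imp_sml[OF bf assms D_imp_TC[OF assms D]])
    then show "\<exists>g. boundary_fun \<alpha> g \<and> g \<in> small_mean_lip" using bf by blast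
  qed
  show ?thesis unfolding bD using CD GD by blast
qed

end
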